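(* Let $d\geq 1$ be an integer. Then $M''(3,2,d)=d+1$.
   Context: All measures are probability measures on $\mathbb{R}^d$ absolutely continuous with respect to Lebesgue measure. A partition of $\mathbb{R}^d$ into $n$ parts formed by iterated hyperplane cuts is an ordered tuple $(K_1,\dots,K_n)$ of closed convex sets (some possibly empty) obtained by starting from the single part $\mathbb{R}^d$ and repeatedly choosing one existing part $C$ and replacing it by $C\cap H^+$ and $C\cap H^-$, where $H^+,H^-$ are the two closed half-spaces of an affine hyperplane (degenerate choices $\{\emptyset,\mathbb{R}^d\}$ allowed), until there are $n$ parts. $M''(n,r,d)$ is the largest integer $M''$ such that for any $M''$ measures $\mu_1,\dots,\mu_{M''}$ on $\mathbb{R}^d$ there is such a partition $(K_1,\dots,K_n)$ and a map $\ell\colon[n]\to[r]$ with $\mu_j\big(\bigcup_{i\in\ell^{-1}(s)}K_i\big)=\tfrac1r$ for all $1\le j\le M''$ and $1\le s\le r$. *)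

theory Defs
  imports "HOL-Probability.Probability"
begin

definition admissible_measure :: "'a::euclidean_space measure \<Rightarrow> bool" where
  "admissible_measure \<mu> \<longleftrightarrow>
     sets \<mu> = sets borel \<and> prob_space \<mu> \<and> absolutely_continuous lborel \<mu>"

definition halfspace_pair :: "'a::euclidean_space set \<Rightarrow> 'a set \<Rightarrow> bool" where
  "halfspace_pair H1 H2 \<longleftrightarrow>
     (\<exists>a b. a \<noteq> 0 \<and> H1 = {x. a \<bullet> x \<le> b} \<and> H2 = {x. a \<bullet> x \<ge> b})
     \<or> (H1 = {} \<and> H2 = UNIV) \<or> (H1 = UNIV \<and> H2 = {})"

inductive iter_cut :: "'a::euclidean_space set list \<Rightarrow> bool" where
  start: "iter_cut [UNIV]"
| cut: "iter_cut Ks \<Longrightarrow> i < length Ks \<Longrightarrow> halfspace_pair H1 H2 \<Longrightarrow>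
          iter_cut (Ks[i := Ks ! i \<inter> H1] @ [Ks ! i \<inter> H2])"

definition fair_splittable :: "nat \<Rightarrow> nat \<Rightarrow> 'a::euclidean_space itself \<Rightarrow> nat \<Rightarrow> bool" where
  "fair_splittable n r (_ :: 'a itself) m \<longleftrightarrow>
     (\<forall>\<mu> :: nat \<Rightarrow> 'a measure. (\<forall>j<m. admissible_measure (\<mu> j)) \<longrightarrow>
        (\<exists>Ks lab. iter_cut Ks \<and> length Ks = n \<and> (\<forall>i<n. lab i < r) \<and>
           (\<forall>j<m. \<forall>s<r. measure (\<mu> j) (\<Union>{Ks ! i | i. i < n \<and> lab i = s}) = 1 / real r)))"

text \<open>M''(n, r, d) with d = DIM('a): the largest such m.\<close>
definition M2 :: "nat \<Rightarrow> nat \<Rightarrow> 'a::euclidean_space itself \<Rightarrow> nat" where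
  "M2 n r T = (GREATEST m. fair_splittable n r T m)"

end

theory Submission
  imports Defs "HOL-Homology.Homology"
begin


definition SS :: "nat \<Rightarrow> (nat \<Rightarrow> real) set" where
  "SS n = {x. (\<Sum>i\<le>n. x i ^ 2) = 1 \<and> (\<forall>i>n. x i = 0)}"

lemma nsphere_eq: "nsphere n = top_of_set (SS n)"
  by (simp add: nsphere SS_def euclidean_product_topology)

lemma topspace_nsphere_SS: "topspace (nsphere n) = SS n"
  by (simp add: nsphere_eq)

lemma homotopic_canonI:
  fixes h :: "real \<times> 'a::topological_space \<Rightarrow> 'b::topological_space"
  assumes "continuous_on ({0..1} \<times> X) h" "h ` ({0..1} \<times> X) \<subseteq> Y"
    "\<And>x. x \<in> X \<Longrightarrow> h (0,x) = f x" "\<And>x. x \<in> X \<Longrightarrow> h (1,x) = g x"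
  shows "homotopic_with_canon (\<lambda>_. True) X Y f g"
proof -
  have "continuous_map (prod_topology (top_of_set {0..1}) (top_of_set X)) (top_of_set Y) h"
    using assms by (auto simp: prod_topology_subtopology_eu continuous_map_subtopology_eu Pi_iff image_subset_iff)
  then show ?thesis using assms by (subst homotopic_with) auto
qed

locale benum =
  fixes b :: "nat \<Rightarrow> 'c::euclidean_space"
  assumes b_inj: "inj_on b {..<DIM('c)}" and b_img: "b ` {..<DIM('c)} = Basis"
begin

lemma b_Basis: "i < DIM('c) \<Longrightarrow> b i \<in> Basis"
  using b_img by blast

lemma b_inner: "i < DIM('c) \<Longrightarrow> j < DIM('c) \<Longrightarrow> b i \<bullet> b j = (if i = j then 1 else 0)"
  using b_Basis inner_Basis b_inj by (metis inj_onD lessThan_iff)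

lemma b_norm: "i < DIM('c) \<Longrightarrow> norm (b i) = 1"
  using b_Basis by simp

lemma repr: "(\<Sum>i<DIM('c). (y \<bullet> b i) *\<^sub>R b i) = y"
proof -
  have "(\<Sum>i<DIM('c). (y \<bullet> b i) *\<^sub>R b i) = (\<Sum>v\<in>b ` {..<DIM('c)}. (y \<bullet> v) *\<^sub>R v)"
    by (simp add: sum.reindex[OF b_inj])
  also have "\<dots> = y" by (simp add: b_img euclidean_representation)
  finally show ?thesis .
qed

lemma norm_sq: "norm y ^ 2 = (\<Sum>i<DIM('c). (y \<bullet> b i) ^ 2)"
proof -
  have "norm y ^ 2 = y \<bullet> y" by (simp add: power2_norm_eq_inner)
  also have "\<dots> = (\<Sum>i<DIM('c). (y \<bullet> b i) *\<^sub>R b i) \<bullet> y" by (simp add: repr)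
  also have "\<dots> = (\<Sum>i<DIM('c). (y \<bullet> b i) ^ 2)"
    by (simp add: inner_sum_left inner_sum_right power2_eq_square inner_commute)
  finally show ?thesis .
qed

definition emb :: "(nat \<Rightarrow> real) \<Rightarrow> 'c" where "emb x = (\<Sum>i<DIM('c). x i *\<^sub>R b i)"
definition prj :: "'c \<Rightarrow> nat \<Rightarrow> real" where "prj y = (\<lambda>i. if i < DIM('c) then y \<bullet> b i else 0)"
definition Sp :: "nat \<Rightarrow> 'c set" where "Sp k = span (b ` {..<k})"
definition Sph :: "nat \<Rightarrow> 'c set" where "Sph k = sphere 0 1 \<inter> Sp (Suc k)"

lemma emb_inner: "i < DIM('c) \<Longrightarrow> emb x \<bullet> b i = x i"
proof -
  assume i: "i < DIM('c)"
  have "emb x \<bullet> b i = (\<Sum>j<DIM('c). x j * (if j = i then 1 else 0))"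
    unfolding emb_def by (simp add: inner_sum_left b_inner i)
  also have "\<dots> = x i" using i by (simp add: if_distrib cong: if_cong)
  finally show ?thesis .
qed

lemma emb_prj: "emb (prj y) = y"
  unfolding emb_def prj_def using repr by simp

lemma subspace_Sp: "subspace (Sp k)"
  by (simp add: Sp_def)

lemma Sp_iff: "k \<le> DIM('c) \<Longrightarrow> y \<in> Sp k \<longleftrightarrow> (\<forall>i. k \<le> i \<and> i < DIM('c) \<longrightarrow> y \<bullet> b i = 0)"
proof
  assume "y \<in> Sp k" and k: "k \<le> DIM('c)"
  show "\<forall>i. k \<le> i \<and> i < DIM('c) \<longrightarrow> y \<bullet> b i = 0"
  proof (intro allI impI)
    fix i assume i: "k \<le> i \<and> i < DIM('c)"
    have "b ` {..<k} \<subseteq> {v. v \<bullet> b i = 0}"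
      using i k by (auto simp: b_inner)
    moreover have "subspace {v. v \<bullet> b i = 0}"
      by (auto simp: subspace_def inner_add_left)
    ultimately have "span (b ` {..<k}) \<subseteq> {v. v \<bullet> b i = 0}"
      by (rule span_minimal)
    then show "y \<bullet> b i = 0" using \<open>y \<in> Sp k\<close> by (auto simp: Sp_def)
  qed
next
  assume k: "k \<le> DIM('c)" and z: "\<forall>i. k \<le> i \<and> i < DIM('c) \<longrightarrow> y \<bullet> b i = 0"
  have "y = (\<Sum>i<DIM('c). (y \<bullet> b i) *\<^sub>R b i)" by (simp add: repr)
  also have "\<dots> = (\<Sum>i<k. (y \<bullet> b i) *\<^sub>R b i)"
    by (rule sum.mono_neutral_right) (use k z in auto)
  also have "\<dots> \<in> Sp k"
    unfolding Sp_def by (intro span_sum span_mul span_base) auto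
  finally show "y \<in> Sp k" .
qed

lemma emb_neg: "emb (\<lambda>i. - x i) = - emb x"
  by (simp add: emb_def sum_negf)

lemma prj_neg: "prj (- y) = (\<lambda>i. - prj y i)"
  by (simp add: prj_def fun_eq_iff)

lemma cont_emb: "continuous_on A emb"
  unfolding emb_def
  by (intro continuous_intros continuous_on_subset[OF continuous_on_product_coordinates]) auto

lemma cont_prj: "continuous_on A prj"
  unfolding prj_def
  apply (rule continuous_on_coordinatewise_then_product)
  subgoal for i by (cases "i < DIM('c)") (auto intro!: continuous_intros)
  done

lemma emb_SS: "k < DIM('c) \<Longrightarrow> x \<in> SS k \<Longrightarrow> emb x \<in> Sph k"
proof -
  assume k: "k < DIM('c)" and x: "x \<in> SS k"
  have "norm (emb x) ^ 2 = (\<Sum>i<DIM('c). (x i) ^ 2)"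
    by (simp add: norm_sq emb_inner)
  also have "\<dots> = (\<Sum>i\<le>k. (x i) ^ 2)"
    by (rule sum.mono_neutral_right) (use k x in \<open>auto simp: SS_def\<close>)
  also have "\<dots> = 1" using x by (simp add: SS_def)
  finally have "norm (emb x) = 1"
    using norm_ge_zero[of "emb x"] by (auto simp: power2_eq_1_iff)
  moreover have "emb x \<in> Sp (Suc k)"
    using k x by (subst Sp_iff) (auto simp: emb_inner SS_def)
  ultimately show ?thesis by (simp add: Sph_def)
qed

lemma prj_Sph: "k < DIM('c) \<Longrightarrow> y \<in> Sph k \<Longrightarrow> prj y \<in> SS k"
proof -
  assume k: "k < DIM('c)" and y: "y \<in> Sph k"
  have z: "\<And>i. k < i \<Longrightarrow> i < DIM('c) \<Longrightarrow> y \<bullet> b i = 0"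
    using y k Sp_iff[of "Suc k" y] by (auto simp: Sph_def)
  have "(\<Sum>i\<le>k. prj y i ^ 2) = (\<Sum>i<DIM('c). (y \<bullet> b i) ^ 2)"
    by (rule sum.mono_neutral_cong_left) (use k z in \<open>auto simp: prj_def\<close>)
  also have "\<dots> = 1" using y by (simp add: Sph_def flip: norm_sq)
  finally show ?thesis using z by (auto simp: SS_def prj_def)
qed

lemma prj_emb: "k < DIM('c) \<Longrightarrow> x \<in> SS k \<Longrightarrow> prj (emb x) = x"
  by (auto simp: prj_def fun_eq_iff emb_inner SS_def)


lemma Sph_mono: "Sph k \<subseteq> Sph (Suc k)"
  unfolding Sph_def Sp_def by (auto intro: span_mono[THEN subsetD, rotated])

lemma Sph_lower: "Suc k < DIM('c) \<Longrightarrow> y \<in> Sph (Suc k) \<Longrightarrow> y \<bullet> b (Suc k) = 0 \<Longrightarrow> y \<in> Sph k"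
proof -
  assume a: "Suc k < DIM('c)" "y \<in> Sph (Suc k)" "y \<bullet> b (Suc k) = 0"
  then have "\<forall>i. Suc (Suc k) \<le> i \<and> i < DIM('c) \<longrightarrow> y \<bullet> b i = 0"
    using Sp_iff[of "Suc (Suc k)" y] by (auto simp: Sph_def)
  then have "\<forall>i. Suc k \<le> i \<and> i < DIM('c) \<longrightarrow> y \<bullet> b i = 0"
    using a(3) by (metis le_antisym not_less_eq_eq)
  then show "y \<in> Sph k" using a Sp_iff[of "Suc k" y] by (auto simp: Sph_def)
qed

lemma Sph_lower_inner: "Suc k < DIM('c) \<Longrightarrow> y \<in> Sph k \<Longrightarrow> y \<bullet> b (Suc k) = 0"
  unfolding Sph_def using Sp_iff[of "Suc k" y] by auto

definition T :: "('c \<Rightarrow> 'c) \<Rightarrow> (nat \<Rightarrow> real) \<Rightarrow> nat \<Rightarrow> real" where "T \<phi> = prj \<circ> \<phi> \<circ> emb"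

lemma T_cont:
  assumes "k < DIM('c)" "continuous_on (Sph k) \<phi>" "\<phi> ` Sph k \<subseteq> Sph k"
  shows "continuous_map (nsphere k) (nsphere k) (T \<phi>)"
proof -
  have "continuous_on (SS k) (\<lambda>x. \<phi> (emb x))"
    by (rule continuous_on_compose2[OF assms(2) cont_emb]) (use emb_SS assms in auto)
  then have "continuous_on (SS k) (T \<phi>)"
    unfolding T_def o_def by (rule continuous_on_compose2[OF cont_prj]) auto
  moreover have "T \<phi> ` SS k \<subseteq> SS k"
  proof
    fix z assume "z \<in> T \<phi> ` SS k"
    then obtain x where x: "x \<in> SS k" "z = T \<phi> x" by auto
    then have "\<phi> (emb x) \<in> Sph k" using emb_SS[OF assms(1) x(1)] assms(3) by blast
    then show "z \<in> SS k" using prj_Sph[OF assms(1)] x by (simp add: T_def)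
  qed
  ultimately show ?thesis
    by (auto simp: nsphere_eq continuous_map_subtopology_eu)
qed

lemma T_hom:
  fixes H :: "real \<times> 'c \<Rightarrow> 'c"
  assumes k: "k < DIM('c)" and H: "continuous_on ({0..1} \<times> Sph k) H" "H ` ({0..1} \<times> Sph k) \<subseteq> Sph k"
    and H0: "\<And>y. y \<in> Sph k \<Longrightarrow> H (0, y) = \<phi> y" and H1: "\<And>y. y \<in> Sph k \<Longrightarrow> H (1, y) = \<psi> y"
  shows "homotopic_with (\<lambda>_. True) (nsphere k) (nsphere k) (T \<phi>) (T \<psi>)"
  unfolding nsphere_eq
proof (rule homotopic_canonI[where h = "\<lambda>z::real \<times> (nat\<Rightarrow>real). prj (H (fst z, emb (snd z)))"])
  have "continuous_on ({0..1} \<times> SS k) (\<lambda>z. (fst z, emb (snd z)))"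
    by (intro continuous_intros continuous_on_compose2[OF cont_emb]) auto
  then have "continuous_on ({0..1} \<times> SS k) (\<lambda>z. H (fst z, emb (snd z)))"
    by (rule continuous_on_compose2[OF H(1)]) (use emb_SS k in auto)
  then show "continuous_on ({0..1} \<times> SS k) (\<lambda>z. prj (H (fst z, emb (snd z))))"
    by (rule continuous_on_compose2[OF cont_prj]) auto
  show "(\<lambda>z. prj (H (fst z, emb (snd z)))) ` ({0..1} \<times> SS k) \<subseteq> SS k"
    using H(2) emb_SS prj_Sph k by fastforce
qed (auto simp: T_def H0 H1 emb_SS k)

lemma cm_emb: "k < DIM('c) \<Longrightarrow> continuous_map (nsphere k) (top_of_set (Sph k)) emb"
  by (auto simp: nsphere_eq continuous_map_subtopology_eu cont_emb emb_SS)

lemma cm_prj: "k < DIM('c) \<Longrightarrow> continuous_map (top_of_set (Sph k)) (nsphere k) prj"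
  by (auto simp: nsphere_eq continuous_map_subtopology_eu cont_prj prj_Sph)

lemma T_hom':
  assumes k: "k < DIM('c)" and h: "homotopic_with_canon (\<lambda>_. True) (Sph k) (Sph k) \<phi> \<psi>"
  shows "homotopic_with (\<lambda>_. True) (nsphere k) (nsphere k) (T \<phi>) (T \<psi>)"
proof -
  have "homotopic_with (\<lambda>_. True) (nsphere k) (top_of_set (Sph k)) (\<phi> \<circ> emb) (\<psi> \<circ> emb)"
    by (rule homotopic_with_compose_continuous_map_right[OF h cm_emb[OF k]]) auto
  then have "homotopic_with (\<lambda>_. True) (nsphere k) (nsphere k) (prj \<circ> (\<phi> \<circ> emb)) (prj \<circ> (\<psi> \<circ> emb))"
    by (rule homotopic_with_compose_continuous_map_left[OF _ cm_prj[OF k]]) auto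
  then show ?thesis by (simp add: T_def o_assoc)
qed

lemma T_odd:
  assumes "k < DIM('c)" "\<And>y. y \<in> Sph k \<Longrightarrow> \<phi> (- y) = - \<phi> y" "u \<in> SS k"
  shows "T \<phi> (\<lambda>i. - u i) = (\<lambda>i. - T \<phi> u i)"
  using assms emb_SS by (simp add: T_def emb_neg prj_neg)

lemma T_comp: "T (\<psi> \<circ> \<phi>) = T \<psi> \<circ> T \<phi>"
  by (simp add: T_def fun_eq_iff emb_prj)

lemma deg_involution:
  assumes "continuous_map (nsphere k) (nsphere k) f" "\<And>x. x \<in> SS k \<Longrightarrow> f (f x) = x"
  shows "\<bar>Brouwer_degree2 k f\<bar> = 1"
proof -
  have "homeomorphic_maps (nsphere k) (nsphere k) f f"
    using assms by (auto simp: homeomorphic_maps_def topspace_nsphere_SS)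
  then show ?thesis by (rule Brouwer_degree2_homeomorphic_maps) 
qed

end

lemma SS0: "x \<in> SS 0 \<longleftrightarrow> x = (\<lambda>i. if i = 0 then 1 else 0) \<or> x = (\<lambda>i. if i = 0 then -1 else 0)"
proof
  assume "x \<in> SS 0"
  then have "x 0 ^ 2 = 1" "\<forall>i>0. x i = 0" by (auto simp: SS_def)
  then show "x = (\<lambda>i. if i = 0 then 1 else 0) \<or> x = (\<lambda>i. if i = 0 then -1 else 0)"
    by (auto simp: fun_eq_iff power2_eq_1_iff)
qed (auto simp: SS_def)

lemma odd_deg0:
  assumes "continuous_map (nsphere 0) (nsphere 0) f" "\<And>u. u \<in> SS 0 \<Longrightarrow> f (\<lambda>i. - u i) = (\<lambda>i. - f u i)"
  shows "odd (Brouwer_degree2 0 f)"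
proof -
  define pp :: "nat \<Rightarrow> real" where "pp = (\<lambda>i. if i = 0 then 1 else 0)"
  define nn :: "nat \<Rightarrow> real" where "nn = (\<lambda>i. if i = 0 then -1 else 0)"
  have S: "x \<in> SS 0 \<longleftrightarrow> x = pp \<or> x = nn" for x using SS0 by (simp add: pp_def nn_def)
  have negp: "(\<lambda>i. - pp i) = nn" "(\<lambda>i. - nn i) = pp" by (auto simp: pp_def nn_def fun_eq_iff)
  have fpp: "f pp \<in> SS 0" using assms(1) S by (auto simp: nsphere_eq continuous_map_def)
  have fnn: "f nn = (\<lambda>i. - f pp i)" using assms(2)[of pp] S negp by simp
  have pn: "pp \<noteq> nn" by (auto simp: pp_def nn_def fun_eq_iff)
  show ?thesis
  proof (cases "f pp = pp")
    case True
    have "f x = id x" if "x \<in> topspace (nsphere 0)" for x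
    proof -
      have "x = pp \<or> x = nn" using that S by (auto simp: topspace_nsphere_SS)
      then show ?thesis using True fnn negp by auto
    qed
    then show ?thesis by (simp add: Brouwer_degree2_eq[of 0 f id])
  next
    case False
    then have fp: "f pp = nn" using fpp S by auto
    have r: "(\<lambda>i. if i = 0 then - pp i else pp i) = nn" "(\<lambda>i. if i = 0 then - nn i else nn i) = pp"
      by (auto simp: pp_def nn_def fun_eq_iff)
    have "f x = (\<lambda>i. if i = 0 then - x i else x i)" if "x \<in> topspace (nsphere 0)" for x
    proof -
      have "x = pp \<or> x = nn" using that S by (auto simp: topspace_nsphere_SS)
      then show ?thesis using r fnn negp fp by auto
    qed
    then have "Brouwer_degree2 0 f = -1"
      using Brouwer_degree2_eq[of 0 f "\<lambda>x i. if i = 0 then - x i else x i"] Brouwer_degree2_reflection by simp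
    then show ?thesis by simp
  qed
qed



lemma normalize_hom:
  fixes f g :: "'a::topological_space \<Rightarrow> 'b::euclidean_space"
  assumes cf: "continuous_on S f" and cg: "continuous_on S g" and V: "subspace V"
    and fV: "\<And>x. x \<in> S \<Longrightarrow> f x \<in> V" and gV: "\<And>x. x \<in> S \<Longrightarrow> g x \<in> V"
    and nz: "\<And>x. x \<in> S \<Longrightarrow> 0 \<notin> closed_segment (f x) (g x)"
  shows "homotopic_with_canon (\<lambda>_. True) S (sphere 0 1 \<inter> V) (\<lambda>x. f x /\<^sub>R norm (f x)) (\<lambda>x. g x /\<^sub>R norm (g x))"
proof -
  have h: "homotopic_with_canon (\<lambda>_. True) S (V - {0}) f g"
  proof (rule homotopic_with_linear[OF cf cg])
    fix x assume x: "x \<in> S"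
    have "closed_segment (f x) (g x) \<subseteq> V"
      by (rule closed_segment_subset) (use subspace_imp_convex[OF V] fV gV x in auto)
    then show "closed_segment (f x) (g x) \<subseteq> V - {0}" using nz x by auto
  qed
  have c: "continuous_on (V - {0}) (\<lambda>y. y /\<^sub>R norm y)" by (intro continuous_intros) auto
  have i: "(\<lambda>y. y /\<^sub>R norm y) \<in> (V - {0}) \<rightarrow> sphere 0 1 \<inter> V" using V by (auto simp: subspace_mul)
  have "homotopic_with_canon (\<lambda>_. True) S (sphere 0 1 \<inter> V) ((\<lambda>y. y /\<^sub>R norm y) \<circ> f) ((\<lambda>y. y /\<^sub>R norm y) \<circ> g)"
    by (rule homotopic_with_compose_continuous_left[OF _ c i]) (use h in simp)
  then show ?thesis by (simp add: o_def)
qed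

definition hrefl :: "'a::real_inner \<Rightarrow> 'a \<Rightarrow> 'a" where
  "hrefl u y = y - ((y \<bullet> u) * (2 / (u \<bullet> u))) *\<^sub>R u"

lemma hrefl_neg: "hrefl u (- y) = - hrefl u y"
  by (simp add: hrefl_def)

lemma hrefl_cont: "continuous_on S (hrefl u)"
  unfolding hrefl_def by (intro continuous_intros)

lemma hrefl_inv: "hrefl u (hrefl u y) = y"
proof (cases "u = 0")
  case True then show ?thesis by (simp add: hrefl_def)
next
  case False
  then have uu: "u \<bullet> u \<noteq> 0" by simp
  have "hrefl u y \<bullet> u = - (y \<bullet> u)"
    using uu by (simp add: hrefl_def inner_diff_left)
  then show ?thesis using uu by (simp add: hrefl_def[of u "hrefl u y"]) (simp add: hrefl_def)
qed

lemma hrefl_norm: "norm (hrefl u y) = norm y"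
proof (cases "u = 0")
  case True then show ?thesis by (simp add: hrefl_def)
next
  case False
  then have uu: "u \<bullet> u \<noteq> 0" by simp
  have "hrefl u y \<bullet> hrefl u y = y \<bullet> y"
    using uu by (simp add: hrefl_def inner_diff_left inner_diff_right field_simps inner_commute)
  then show ?thesis by (simp add: norm_eq_sqrt_inner)
qed

lemma hrefl_swap:
  assumes "norm p = norm e"
  shows "hrefl (p - e) p = e"
proof (cases "p = e")
  case True then show ?thesis by (simp add: hrefl_def)
next
  case False
  then have uu: "(p - e) \<bullet> (p - e) \<noteq> 0" by simp
  have pp: "p \<bullet> p = e \<bullet> e" using assms by (simp add: dot_square_norm)
  have eq: "(p - e) \<bullet> (p - e) = 2 * (p \<bullet> (p - e))"
    using pp by (simp add: inner_diff_left inner_diff_right inner_commute)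
  have nz: "p \<bullet> (p - e) \<noteq> 0" by (metis uu eq mult_zero_right)
  have c1: "(p \<bullet> (p - e)) * (2 / ((p - e) \<bullet> (p - e))) = 1" using nz by (simp add: eq)
  show ?thesis unfolding hrefl_def c1 by simp
qed

lemma hrefl_subspace: "subspace V \<Longrightarrow> u \<in> V \<Longrightarrow> y \<in> V \<Longrightarrow> hrefl u y \<in> V"
  unfolding hrefl_def by (intro subspace_diff subspace_scale) auto

lemma norm_sub_unit:
  fixes y e :: "'a::real_inner"
  assumes "norm e = 1"
  shows "norm (y - s *\<^sub>R e) ^ 2 = norm y ^ 2 - 2 * s * (y \<bullet> e) + s ^ 2"
proof -
  have ee: "e \<bullet> e = 1" using assms by (simp add: dot_square_norm)
  have "norm (y - s *\<^sub>R e) ^ 2 = (y - s *\<^sub>R e) \<bullet> (y - s *\<^sub>R e)" by (rule power2_norm_eq_inner)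
  also have "\<dots> = y \<bullet> y - 2 * s * (y \<bullet> e) + s ^ 2"
    using ee by (simp add: inner_diff_left inner_diff_right inner_commute power2_eq_square algebra_simps)
  finally show ?thesis by (simp add: power2_norm_eq_inner)
qed

lemma unit_inner_sq_le:
  fixes y e :: "'a::real_inner"
  assumes "norm y = 1" "norm e = 1"
  shows "(y \<bullet> e) ^ 2 \<le> 1"
proof -
  have "\<bar>y \<bullet> e\<bar> \<le> 1" using Cauchy_Schwarz_ineq2[of y e] assms by simp
  then show ?thesis by (simp add: abs_le_square_iff[of _ 1, simplified] power_le_one)
qed

lemma unit_parallel:
  fixes y e :: "'a::real_inner"
  assumes "norm y = 1" "norm e = 1" "(y \<bullet> e) ^ 2 = 1"
  shows "y = (y \<bullet> e) *\<^sub>R e"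
proof -
  have "norm (y - (y \<bullet> e) *\<^sub>R e) ^ 2 = 0"
    using norm_sub_unit[OF assms(2), of y "y \<bullet> e"] assms by (simp add: power2_eq_square)
  then show ?thesis by simp
qed

context benum begin

lemma dim_Sp: "j \<le> DIM('c) \<Longrightarrow> dim (Sp j) = j"
proof -
  assume j: "j \<le> DIM('c)"
  have sub: "b ` {..<j} \<subseteq> Basis" using b_Basis j by auto
  have ind: "independent (b ` {..<j})"
    using independent_mono[OF independent_Basis sub] .
  have "inj_on b {..<j}" using b_inj j by (auto intro: inj_on_subset)
  then have "card (b ` {..<j}) = j" by (simp add: card_image)
  then show ?thesis unfolding Sp_def using dim_span_eq_card_independent[OF ind] by simp
qed

lemma Sp_mono: "i \<le> j \<Longrightarrow> Sp i \<subseteq> Sp j"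
  unfolding Sp_def by (intro span_mono) auto

lemma compact_Sph: "compact (Sph k)"
  unfolding Sph_def by (intro compact_Int_closed compact_sphere closed_subspace subspace_Sp)

lemma Sph_neg: "y \<in> Sph k \<Longrightarrow> - y \<in> Sph k"
  unfolding Sph_def using subspace_neg[OF subspace_Sp] by auto

lemma b_Sph: "k < DIM('c) \<Longrightarrow> b k \<in> Sph k"
  unfolding Sph_def Sp_def using b_norm by (auto intro: span_base)

lemma EC:
  assumes m: "Suc m < DIM('c)"
    and cont: "continuous_on (Sph (Suc m)) \<phi>" and im: "\<phi> ` Sph (Suc m) \<subseteq> Sph (Suc m)"
    and odd: "\<And>y. y \<in> Sph (Suc m) \<Longrightarrow> \<phi> (-y) = - \<phi> y"
  obtains \<rho> R \<psi> where
    "homotopic_with_canon (\<lambda>_. True) (Sph (Suc m)) (Sph (Suc m)) \<phi> \<rho>"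
    "continuous_on (Sph (Suc m)) \<rho>" "\<rho> ` Sph (Suc m) \<subseteq> Sph (Suc m)"
    "continuous_on (Sph (Suc m)) R" "R ` Sph (Suc m) \<subseteq> Sph (Suc m)" "\<And>y. R (R y) = y"
    "homotopic_with_canon (\<lambda>_. True) (Sph (Suc m)) (Sph (Suc m)) (R \<circ> \<rho>) \<psi>"
    "continuous_on (Sph (Suc m)) \<psi>" "\<psi> ` Sph (Suc m) \<subseteq> Sph (Suc m)" "\<psi> ` Sph m \<subseteq> Sph m"
    "\<And>y. y \<in> Sph (Suc m) \<Longrightarrow> \<psi> (-y) = - \<psi> y"
proof -
  define k where "k = Suc m"
  define S where "S = Sph k"
  define V where "V = Sp (Suc k)"
  have SV: "S = sphere 0 1 \<inter> V" by (simp add: S_def V_def Sph_def)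
  have Vsub: "subspace V" by (simp add: V_def subspace_Sp)
  have kN: "k < DIM('c)" using m by (simp add: k_def)
  have cont': "continuous_on S \<phi>" and im': "\<phi> ` S \<subseteq> S" and odd': "\<And>y. y \<in> S \<Longrightarrow> \<phi> (-y) = - \<phi> y"
    using cont im odd by (simp_all add: S_def k_def)
  have negS: "\<And>x. x \<in> S \<Longrightarrow> -x \<in> S" by (simp add: S_def Sph_neg)
  have phinorm: "\<And>x. x \<in> S \<Longrightarrow> norm (\<phi> x) = 1" using im' unfolding SV by (auto simp: image_subset_iff)
  obtain g where pg: "polynomial_function g" and gV: "g ` S \<subseteq> V"
    and gclose: "\<And>x. x \<in> S \<Longrightarrow> norm (\<phi> x - g x) < 1/2"
    using Stone_Weierstrass_polynomial_function_subspace[OF compact_Sph[of k, folded S_def] cont' _ Vsub, of "1/2"] im' SV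
    by auto
  define go where "go x = (1/2) *\<^sub>R (g x - g (-x))" for x
  have go_close: "norm (\<phi> x - go x) < 1/2" if x: "x \<in> S" for x
  proof -
    have "\<phi> x - go x = (1/2) *\<^sub>R ((\<phi> x - g x) - (\<phi> (-x) - g (-x)))"
      using odd'[OF x] by (simp add: go_def algebra_simps) (simp flip: scaleR_add_left)
    also have "norm \<dots> \<le> (1/2) * (norm (\<phi> x - g x) + norm (\<phi> (-x) - g (-x)))"
      by (simp add: norm_triangle_ineq4)
    also have "\<dots> < 1/2" using gclose[OF x] gclose[OF negS[OF x]] by simp
    finally show ?thesis .
  qed
  have goV: "go x \<in> V" if "x \<in> S" for x
    unfolding go_def using gV that negS by (intro subspace_scale[OF Vsub] subspace_diff[OF Vsub]) auto
  have go_odd: "go (-x) = - go x" for x by (simp add: go_def algebra_simps)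
  have go_nz: "go x \<noteq> 0" if "x \<in> S" for x
    using go_close[OF that] phinorm[OF that] by auto
  have pgo: "polynomial_function go"
  proof -
    have "polynomial_function (g \<circ> (\<lambda>x. - x))"
      by (intro polynomial_function_compose pg polynomial_function_minus polynomial_function_id)
    then show ?thesis unfolding go_def o_def using pg by (intro polynomial_function_cmul polynomial_function_diff) auto
  qed
  have diffgo: "go differentiable_on A" for A by (rule differentiable_on_polynomial_function[OF pgo])
  define \<rho> where "\<rho> x = go x /\<^sub>R norm (go x)" for x
  have diffrho: "\<rho> differentiable_on S"
    unfolding \<rho>_def using go_nz
    by (fastforce intro: derivative_intros diffgo differentiable_on_compose [OF diffgo])
  have rhoS: "\<rho> x \<in> S" if "x \<in> S" for x
    using go_nz[OF that] goV[OF that] SV Vsub by (auto simp: \<rho>_def subspace_scale)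
  have rho_odd: "\<rho> (-x) = - \<rho> x" for x by (simp add: \<rho>_def go_odd)
  have cgo: "continuous_on S go" using diffgo differentiable_imp_continuous_on by blast
  have hom1: "homotopic_with_canon (\<lambda>_. True) S S \<phi> \<rho>"
  proof -
    have "homotopic_with_canon (\<lambda>_. True) S (sphere 0 1 \<inter> V) (\<lambda>x. \<phi> x /\<^sub>R norm (\<phi> x)) \<rho>"
      unfolding \<rho>_def
    proof (rule normalize_hom[OF cont' cgo Vsub])
      show "\<phi> x \<in> V" if "x \<in> S" for x using im' that SV by auto
      show "go x \<in> V" if "x \<in> S" for x using goV that by auto
      show "0 \<notin> closed_segment (\<phi> x) (go x)" if x: "x \<in> S" for x
      proof
        assume "0 \<in> closed_segment (\<phi> x) (go x)"
        then have "norm (0 - \<phi> x) \<le> norm (go x - \<phi> x)" by (rule segment_bound)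
        then show False using go_close[OF x] phinorm[OF x] by (simp add: norm_minus_commute)
      qed
    qed
    then have "homotopic_with_canon (\<lambda>_. True) S S (\<lambda>x. \<phi> x /\<^sub>R norm (\<phi> x)) \<rho>"
      by (simp only: SV)
    then show ?thesis
      by (rule homotopic_with_eq) (use phinorm SV in auto)
  qed
  have crho: "continuous_on S \<rho>" using diffrho differentiable_imp_continuous_on by blast
  \<comment> \<open>a point missed on the equator\<close>
  have eqS: "Sph m = sphere 0 1 \<inter> Sp k" by (simp add: Sph_def k_def)
  have "\<rho> ` (sphere 0 1 \<inter> Sp k) \<noteq> sphere 0 1 \<inter> Sp (Suc k)"
  proof (rule spheremap_lemma1[OF subspace_Sp subspace_Sp])
    show "dim (Sp k) < dim (Sp (Suc k))" using kN by (simp add: dim_Sp)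
    show "Sp k \<subseteq> Sp (Suc k)" by (simp add: Sp_mono)
    show "\<rho> differentiable_on sphere 0 1 \<inter> Sp k"
      by (rule differentiable_on_subset[OF diffrho]) (use Sp_mono[of k "Suc k"] in \<open>auto simp: S_def Sph_def\<close>)
  qed
  moreover have "\<rho> ` (sphere 0 1 \<inter> Sp k) \<subseteq> sphere 0 1 \<inter> Sp (Suc k)"
    using rhoS Sp_mono[of k "Suc k"] by (auto simp: S_def Sph_def)
  ultimately have "\<exists>p \<in> sphere 0 1 \<inter> Sp (Suc k). p \<notin> \<rho> ` (sphere 0 1 \<inter> Sp k)" by blast
  then obtain p where pS: "p \<in> S" and pnot: "p \<notin> \<rho> ` Sph m"
    unfolding eqS by (auto simp: S_def Sph_def)
  have pnot': "\<rho> x \<noteq> p" "\<rho> x \<noteq> - p" if "x \<in> Sph m" for x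
  proof -
    show "\<rho> x \<noteq> p" using pnot that by auto
    have "-x \<in> Sph m" using that by (rule Sph_neg)
    then have "\<rho> (-x) \<noteq> p" using pnot by auto
    then show "\<rho> x \<noteq> - p" by (auto simp: rho_odd)
  qed
  define e where "e = b k"
  have eS: "e \<in> S" by (simp add: e_def S_def b_Sph kN)
  have enorm: "norm e = 1" using eS SV by auto
  define R where "R = hrefl (p - e)"
  have Rp: "R p = e" using pS eS SV by (simp add: R_def hrefl_swap)
  have Re: "R e = p" using Rp hrefl_inv[of "p - e" p] by (simp add: R_def)
  have RR: "R (R y) = y" for y by (simp add: R_def hrefl_inv)
  have Rneg: "R (- y) = - R y" for y by (simp add: R_def hrefl_neg)
  have cR: "continuous_on A R" for A by (simp add: R_def hrefl_cont)
  have RS: "R y \<in> S" if "y \<in> S" for y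
    using that pS eS SV Vsub by (auto simp: R_def hrefl_norm intro!: hrefl_subspace subspace_diff)
  define y where "y x = R (\<rho> x)" for x
  define t where "t x = y x \<bullet> e" for x
  define c where "c x = (1 - (t x)^2) / (1 - (t x)^2 + (x \<bullet> e)^2)" for x
  define w where "w x = y x - (c x * t x) *\<^sub>R e" for x
  define \<psi> where "\<psi> x = w x /\<^sub>R norm (w x)" for x
  have yS: "y x \<in> S" if "x \<in> S" for x using that by (simp add: y_def RS rhoS)
  have ynorm: "norm (y x) = 1" if "x \<in> S" for x using yS[OF that] SV by auto
  have y_odd: "y (-x) = - y x" for x by (simp add: y_def rho_odd Rneg)
  have t_le: "(t x)^2 \<le> 1" if "x \<in> S" for x
    unfolding t_def by (rule unit_inner_sq_le[OF ynorm[OF that] enorm])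
  have equator: "x \<in> Sph m" if "x \<in> S" "x \<bullet> e = 0" for x
    using Sph_lower[of m x] that m by (simp add: S_def k_def e_def)
  have t_lt: "(t x)^2 < 1" if "x \<in> Sph m" for x
  proof -
    have xS: "x \<in> S" using that Sph_mono[of m] by (auto simp: S_def k_def)
    show ?thesis
    proof (rule ccontr)
      assume "\<not> (t x)^2 < 1"
      then have t1: "(t x)^2 = 1" using t_le[OF xS] by simp
      then have yx: "y x = t x *\<^sub>R e"
        using unit_parallel[OF ynorm[OF xS] enorm] by (simp add: t_def)
      have "t x = 1 \<or> t x = -1" using t1 by (simp add: power2_eq_1_iff)
      then show False
      proof
        assume "t x = 1"
        then have "y x = e" using yx by simp
        then have "\<rho> x = p" using RR[of "\<rho> x"] Re by (simp add: y_def)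
        then show False using pnot'[OF that] by simp
      next
        assume "t x = -1"
        then have "y x = - e" using yx by simp
        then have "\<rho> x = - p" using RR[of "\<rho> x"] Re Rneg[of e] by (simp add: y_def)
        then show False using pnot'[OF that] by simp
      qed
    qed
  qed
  have den_pos: "0 < 1 - (t x)^2 + (x \<bullet> e)^2" if "x \<in> S" for x
  proof (cases "x \<bullet> e = 0")
    case True
    then show ?thesis using t_lt[OF equator[OF that True]] by simp
  next
    case False
    then show ?thesis using t_le[OF that] by (simp add: add_nonneg_pos)
  qed
  have c01: "0 \<le> c x" "c x \<le> 1" if "x \<in> S" for x
    using den_pos[OF that] t_le[OF that] by (auto simp: c_def divide_le_eq_1)
  have c_t1: "c x = 0" if "x \<in> S" "(t x)^2 = 1" for x using that by (simp add: c_def)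
  have c_eq: "c x = 1" if "x \<in> Sph m" for x
  proof -
    have "x \<bullet> e = 0" using Sph_lower_inner[of m x] m that by (simp add: e_def k_def)
    then show ?thesis using t_lt[OF that] by (simp add: c_def)
  qed
  have cy: "continuous_on S y" unfolding y_def by (intro continuous_on_compose2[OF cR crho]) auto
  have ct: "continuous_on S t" unfolding t_def by (intro continuous_intros cy)
  have cc: "continuous_on S c"
  proof -
    have nz: "\<forall>x\<in>S. 1 - (t x)^2 + (x \<bullet> e)^2 \<noteq> 0" using den_pos by (metis less_irrefl)
    show ?thesis unfolding c_def
      by (rule continuous_on_divide) (intro continuous_intros ct, intro continuous_intros ct, rule nz)
  qed
  have cw: "continuous_on S w" unfolding w_def by (intro continuous_intros cy cc ct)
  have eV: "e \<in> V" using eS SV by auto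
  have wV: "w x \<in> V" if "x \<in> S" for x
    unfolding w_def using yS[OF that] SV eV by (intro subspace_diff[OF Vsub] subspace_scale[OF Vsub]) auto
  have seg_norm: "norm (y x - s *\<^sub>R e) ^ 2 = (1 - (t x)^2) + (t x - s)^2" if "x \<in> S" for x s
    using norm_sub_unit[OF enorm, of "y x" s] ynorm[OF that] by (simp add: t_def power2_diff algebra_simps)
  have hom2: "homotopic_with_canon (\<lambda>_. True) S S (R \<circ> \<rho>) \<psi>"
  proof -
    have "homotopic_with_canon (\<lambda>_. True) S (sphere 0 1 \<inter> V) (\<lambda>x. y x /\<^sub>R norm (y x)) \<psi>"
      unfolding \<psi>_def
    proof (rule normalize_hom[OF cy cw Vsub])
      show "y x \<in> V" if "x \<in> S" for x using yS[OF that] SV by auto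
      show "w x \<in> V" if "x \<in> S" for x using wV[OF that] .
      show "0 \<notin> closed_segment (y x) (w x)" if x: "x \<in> S" for x
      proof
        assume "0 \<in> closed_segment (y x) (w x)"
        then obtain u where u: "0 \<le> u" "u \<le> 1" "(1 - u) *\<^sub>R y x + u *\<^sub>R w x = 0"
          by (auto simp: closed_segment_def)
        have "(1 - u) *\<^sub>R y x + u *\<^sub>R w x = y x - (u * c x * t x) *\<^sub>R e"
          by (simp add: w_def algebra_simps)
        then have z: "y x - (u * c x * t x) *\<^sub>R e = 0" using u by simp
        have "(1 - (t x)^2) + (t x - u * c x * t x)^2 = 0"
          using seg_norm[OF x, of "u * c x * t x"] z by simp
        moreover have "0 \<le> 1 - (t x)^2" using t_le[OF x] by simp
        moreover have "0 \<le> (t x - u * c x * t x)^2" by simp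
        ultimately have t1: "(t x)^2 = 1" and "(t x - u * c x * t x)^2 = 0"
          by linarith+
        then have "t x - u * c x * t x = 0" by simp
        then have "t x = 0" using c_t1[OF x t1] by simp
        then show False using t1 by simp
      qed
    qed
    then have "homotopic_with_canon (\<lambda>_. True) S S (\<lambda>x. y x /\<^sub>R norm (y x)) \<psi>"
      by (simp only: SV)
    then show ?thesis
      by (rule homotopic_with_eq) (use ynorm SV in \<open>auto simp: y_def\<close>)
  qed
  have psiS: "\<psi> ` S \<subseteq> S" using homotopic_with_imp_subset2[OF hom2] .
  have cpsi: "continuous_on S \<psi>" using homotopic_with_imp_continuous[OF hom2] by blast
  have psi_odd: "\<psi> (-x) = - \<psi> x" if "x \<in> S" for x
  proof -
    have "t (-x) = - t x" by (simp add: t_def y_odd)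
    moreover have "c (-x) = c x" by (simp add: c_def t_def y_odd)
    ultimately have "w (-x) = - w x" by (simp add: w_def y_odd algebra_simps)
    then show ?thesis by (simp add: \<psi>_def)
  qed
  have psi_eq: "\<psi> x \<in> Sph m" if x: "x \<in> Sph m" for x
  proof -
    have xS: "x \<in> S" using x Sph_mono[of m] by (auto simp: S_def k_def)
    have "w x \<bullet> e = 0" using c_eq[OF x] enorm by (simp add: w_def t_def inner_diff_left dot_square_norm)
    then have "\<psi> x \<bullet> e = 0" by (simp add: \<psi>_def)
    moreover have "\<psi> x \<in> S" using psiS xS by auto
    ultimately show ?thesis using equator by blast
  qed
  show thesis
  proof (rule that[of \<rho> R \<psi>])
    show "homotopic_with_canon (\<lambda>_. True) (Sph (Suc m)) (Sph (Suc m)) \<phi> \<rho>"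
      using hom1 by (simp add: S_def k_def)
    show "continuous_on (Sph (Suc m)) \<rho>" using crho by (simp add: S_def k_def)
    show "\<rho> ` Sph (Suc m) \<subseteq> Sph (Suc m)" using rhoS by (auto simp: S_def k_def)
    show "continuous_on (Sph (Suc m)) R" by (rule cR)
    show "R ` Sph (Suc m) \<subseteq> Sph (Suc m)" using RS by (auto simp: S_def k_def)
    show "R (R y) = y" for y by (rule RR)
    show "homotopic_with_canon (\<lambda>_. True) (Sph (Suc m)) (Sph (Suc m)) (R \<circ> \<rho>) \<psi>"
      using hom2 by (simp add: S_def k_def)
    show "continuous_on (Sph (Suc m)) \<psi>" using cpsi by (simp add: S_def k_def)
    show "\<psi> ` Sph (Suc m) \<subseteq> Sph (Suc m)" using psiS by (simp add: S_def k_def)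
    show "\<psi> ` Sph m \<subseteq> Sph m" using psi_eq by auto
    show "\<psi> (-y) = - \<psi> y" if "y \<in> Sph (Suc m)" for y using psi_odd that by (simp add: S_def k_def)
  qed
qed

end



context benum begin

lemma odd_deg:
  "k < DIM('c) \<Longrightarrow> continuous_map (nsphere k) (nsphere k) f \<Longrightarrow>
   (\<And>u. u \<in> SS k \<Longrightarrow> f (\<lambda>i. - u i) = (\<lambda>i. - f u i)) \<Longrightarrow> odd (Brouwer_degree2 k f)"
proof (induction k arbitrary: f)
  case 0
  then show ?case using odd_deg0 by blast
next
  case (Suc m)
  note kN = Suc.prems(1)
  have mN: "m < DIM('c)" using kN by simp
  have fcont: "continuous_on (SS (Suc m)) f" and fim: "f ` SS (Suc m) \<subseteq> SS (Suc m)"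
    using Suc.prems(2) by (auto simp: nsphere_eq continuous_map_subtopology_eu)
  define \<phi> where "\<phi> = emb \<circ> f \<circ> prj"
  have c1: "continuous_on (Sph (Suc m)) (\<lambda>y. f (prj y))"
    by (rule continuous_on_compose2[OF fcont cont_prj]) (use prj_Sph kN in auto)
  have c\<phi>: "continuous_on (Sph (Suc m)) \<phi>"
    unfolding \<phi>_def o_def by (rule continuous_on_compose2[OF cont_emb c1]) auto
  have im\<phi>: "\<phi> ` Sph (Suc m) \<subseteq> Sph (Suc m)"
    using prj_Sph[OF kN] fim emb_SS[OF kN] by (auto simp: \<phi>_def)
  have odd\<phi>: "\<phi> (-y) = - \<phi> y" if "y \<in> Sph (Suc m)" for y
    using Suc.prems(3)[OF prj_Sph[OF kN that]] by (simp add: \<phi>_def prj_neg emb_neg)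
  have T\<phi>: "T \<phi> x = f x" if "x \<in> SS (Suc m)" for x
  proof -
    have "f x \<in> SS (Suc m)" using fim that by auto
    then show ?thesis using that by (simp add: T_def \<phi>_def prj_emb[OF kN])
  qed
  have dphi: "Brouwer_degree2 (Suc m) f = Brouwer_degree2 (Suc m) (T \<phi>)"
    by (rule Brouwer_degree2_eq) (simp add: topspace_nsphere_SS T\<phi>)
  obtain \<rho> R \<psi> where
    h1: "homotopic_with_canon (\<lambda>_. True) (Sph (Suc m)) (Sph (Suc m)) \<phi> \<rho>"
    and c\<rho>: "continuous_on (Sph (Suc m)) \<rho>" and im\<rho>: "\<rho> ` Sph (Suc m) \<subseteq> Sph (Suc m)"
    and cR: "continuous_on (Sph (Suc m)) R" and imR: "R ` Sph (Suc m) \<subseteq> Sph (Suc m)" and RR: "\<And>y. R (R y) = y"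
    and h2: "homotopic_with_canon (\<lambda>_. True) (Sph (Suc m)) (Sph (Suc m)) (R \<circ> \<rho>) \<psi>"
    and c\<psi>: "continuous_on (Sph (Suc m)) \<psi>" and im\<psi>: "\<psi> ` Sph (Suc m) \<subseteq> Sph (Suc m)"
    and eq\<psi>: "\<psi> ` Sph m \<subseteq> Sph m" and odd\<psi>: "\<And>y. y \<in> Sph (Suc m) \<Longrightarrow> \<psi> (-y) = - \<psi> y"
    using EC[OF kN c\<phi> im\<phi> odd\<phi>] by blast
  have d1: "Brouwer_degree2 (Suc m) (T \<phi>) = Brouwer_degree2 (Suc m) (T \<rho>)"
    by (rule Brouwer_degree2_homotopic[OF T_hom'[OF kN h1]])
  have cT\<rho>: "continuous_map (nsphere (Suc m)) (nsphere (Suc m)) (T \<rho>)" by (rule T_cont[OF kN c\<rho> im\<rho>])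
  have cTR: "continuous_map (nsphere (Suc m)) (nsphere (Suc m)) (T R)" by (rule T_cont[OF kN cR imR])
  have d2: "Brouwer_degree2 (Suc m) (T (R \<circ> \<rho>)) = Brouwer_degree2 (Suc m) (T R) * Brouwer_degree2 (Suc m) (T \<rho>)"
    unfolding T_comp by (rule Brouwer_degree2_compose[OF cT\<rho> cTR])
  have d3: "Brouwer_degree2 (Suc m) (T (R \<circ> \<rho>)) = Brouwer_degree2 (Suc m) (T \<psi>)"
    by (rule Brouwer_degree2_homotopic[OF T_hom'[OF kN h2]])
  have dR: "\<bar>Brouwer_degree2 (Suc m) (T R)\<bar> = 1"
  proof (rule deg_involution[OF cTR])
    fix x assume "x \<in> SS (Suc m)"
    then show "T R (T R x) = x" by (simp add: T_def emb_prj RR prj_emb[OF kN])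
  qed
  have cT\<psi>: "continuous_map (nsphere (Suc m)) (nsphere (Suc m)) (T \<psi>)" by (rule T_cont[OF kN c\<psi> im\<psi>])
  have step: "even (Brouwer_degree2 (Suc m) (T \<psi>) - Brouwer_degree2 (Suc m - Suc 0) (T \<psi>))"
  proof (rule Borsuk_odd_mapping_degree_step[OF cT\<psi>])
    show "(T \<psi> \<circ> (\<lambda>x i. - x i)) u = ((\<lambda>x i. - x i) \<circ> T \<psi>) u" if "u \<in> topspace (nsphere (Suc m))" for u
      using T_odd[OF kN, of \<psi> u] odd\<psi> that by (simp add: topspace_nsphere_SS)
    show "T \<psi> \<in> topspace (nsphere (Suc m - Suc 0)) \<rightarrow> topspace (nsphere (Suc m - Suc 0))"
      using emb_SS[OF mN] eq\<psi> prj_Sph[OF mN] by (auto simp: topspace_nsphere_SS T_def image_subset_iff)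
  qed
  have c\<psi>m: "continuous_on (Sph m) \<psi>" by (rule continuous_on_subset[OF c\<psi> Sph_mono])
  have IH: "odd (Brouwer_degree2 m (T \<psi>))"
  proof (rule Suc.IH[OF mN T_cont[OF mN c\<psi>m eq\<psi>]])
    fix u assume "u \<in> SS m"
    then show "T \<psi> (\<lambda>i. - u i) = (\<lambda>i. - T \<psi> u i)"
      using T_odd[OF mN, of \<psi> u] odd\<psi> Sph_mono[of m] by auto
  qed
  have "odd (Brouwer_degree2 (Suc m) (T \<psi>))" using step IH by simp
  then have "odd (Brouwer_degree2 (Suc m) (T R) * Brouwer_degree2 (Suc m) (T \<rho>))" using d2 d3 by simp
  then have "odd (Brouwer_degree2 (Suc m) (T \<rho>))" by simp
  then show ?case using dphi d1 by simp
qed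

lemma BU_core:
  assumes kN: "Suc m < DIM('c)" and cG: "continuous_on (Sph (Suc m)) G" and imG: "G ` Sph (Suc m) \<subseteq> Sph m"
    and oddG: "\<And>y. y \<in> Sph (Suc m) \<Longrightarrow> G (-y) = - G y"
  shows False
proof -
  have mN: "m < DIM('c)" using kN by simp
  have imG': "G ` Sph (Suc m) \<subseteq> Sph (Suc m)" using imG Sph_mono by blast
  have cT: "continuous_map (nsphere (Suc m)) (nsphere (Suc m)) (T G)" by (rule T_cont[OF kN cG imG'])
  have eqG: "G ` Sph m \<subseteq> Sph m" using imG Sph_mono[of m] by blast
  have step: "even (Brouwer_degree2 (Suc m) (T G) - Brouwer_degree2 (Suc m - Suc 0) (T G))"
  proof (rule Borsuk_odd_mapping_degree_step[OF cT])
    show "(T G \<circ> (\<lambda>x i. - x i)) u = ((\<lambda>x i. - x i) \<circ> T G) u" if "u \<in> topspace (nsphere (Suc m))" for u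
      using T_odd[OF kN, of G u] oddG that by (simp add: topspace_nsphere_SS)
    show "T G \<in> topspace (nsphere (Suc m - Suc 0)) \<rightarrow> topspace (nsphere (Suc m - Suc 0))"
      using emb_SS[OF mN] eqG prj_Sph[OF mN] by (auto simp: topspace_nsphere_SS T_def image_subset_iff)
  qed
  have "T G ` topspace (nsphere (Suc m)) \<noteq> topspace (nsphere (Suc m))"
  proof
    assume eq: "T G ` topspace (nsphere (Suc m)) = topspace (nsphere (Suc m))"
    have "prj (b (Suc m)) \<in> SS (Suc m)" using prj_Sph[OF kN b_Sph[OF kN]] .
    then have "prj (b (Suc m)) \<in> T G ` SS (Suc m)" using eq by (simp add: topspace_nsphere_SS)
    then obtain x where x: "x \<in> SS (Suc m)" "T G x = prj (b (Suc m))"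
      by (metis imageE)
    have "G (emb x) \<in> Sph m" using imG emb_SS[OF kN x(1)] by auto
    then have "G (emb x) \<bullet> b (Suc m) = 0" using Sph_lower_inner[OF kN] by simp
    moreover have "T G x (Suc m) = G (emb x) \<bullet> b (Suc m)" using kN by (simp add: T_def prj_def)
    moreover have "prj (b (Suc m)) (Suc m) = 1" using kN by (simp add: prj_def b_inner)
    ultimately show False using x(2) by simp
  qed
  then have "Brouwer_degree2 (Suc m) (T G) = 0" by (rule Brouwer_degree2_nonsurjective[OF cT])
  moreover have "odd (Brouwer_degree2 m (T G))"
  proof (rule odd_deg[OF mN T_cont[OF mN continuous_on_subset[OF cG Sph_mono] eqG]])
    fix u assume "u \<in> SS m"
    then show "T G (\<lambda>i. - u i) = (\<lambda>i. - T G u i)"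
      using T_odd[OF mN, of G u] oddG Sph_mono[of m] by auto
  qed
  ultimately show False using step by simp
qed

end

lemma benum_prod:
  fixes e :: "nat \<Rightarrow> 'e::euclidean_space"
  assumes e: "bij_betw e {..<DIM('e)} Basis"
  shows "benum (\<lambda>i. if i < DIM('e) then (e i, 0::real) else (0, 1))"
proof
  let ?b = "\<lambda>i. if i < DIM('e) then (e i, 0::real) else (0, 1)"
  have ei: "inj_on e {..<DIM('e)}" and ee: "e ` {..<DIM('e)} = Basis" using e by (auto simp: bij_betw_def)
  show "inj_on ?b {..<DIM('e \<times> real)}"
  proof (rule inj_onI)
    fix i j assume i: "i \<in> {..<DIM('e \<times> real)}" and j: "j \<in> {..<DIM('e \<times> real)}" and eq: "?b i = ?b j"
    have nz: "e k \<noteq> 0" if "k < DIM('e)" for k using ee that by (metis image_eqI lessThan_iff nonzero_Basis)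
    show "i = j"
    proof (cases "i < DIM('e)"; cases "j < DIM('e)")
      assume "i < DIM('e)" "j < DIM('e)" then show ?thesis using eq ei by (auto dest: inj_onD)
    next
      assume "i < DIM('e)" "\<not> j < DIM('e)" then show ?thesis using eq by auto
    next
      assume "\<not> i < DIM('e)" "j < DIM('e)" then show ?thesis using eq by auto
    next
      assume "\<not> i < DIM('e)" "\<not> j < DIM('e)" then show ?thesis using i j by auto
    qed
  qed
  show "?b ` {..<DIM('e \<times> real)} = Basis"
  proof -
    have "{..<DIM('e \<times> real)} = {..<DIM('e)} \<union> {DIM('e)}" by auto
    then have "?b ` {..<DIM('e \<times> real)} = (\<lambda>i. (e i, 0)) ` {..<DIM('e)} \<union> {(0, 1)}" by auto
    also have "\<dots> = (\<lambda>u. (u, 0)) ` Basis \<union> {(0, 1)}" using ee by (auto simp: image_image[symmetric])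
    also have "\<dots> = Basis" by (simp add: Basis_prod_def)
    finally show ?thesis .
  qed
qed

theorem borsuk_ulam:
  fixes F :: "'e::euclidean_space \<times> real \<Rightarrow> 'e"
  assumes cF: "continuous_on (sphere 0 1) F" and oF: "\<And>z. z \<in> sphere 0 1 \<Longrightarrow> F (-z) = - F z"
  shows "\<exists>z \<in> sphere 0 1. F z = 0"
proof (rule ccontr)
  assume nz: "\<not> (\<exists>z \<in> sphere 0 1. F z = 0)"
  obtain e :: "nat \<Rightarrow> 'e" where e: "bij_betw e {..<DIM('e)} Basis"
    using ex_bij_betw_nat_finite[of "Basis :: 'e set"] by (auto simp: atLeast0LessThan)
  define b where "b = (\<lambda>i. if i < DIM('e) then (e i, 0::real) else (0, 1))"
  interpret benum b unfolding b_def by (rule benum_prod[OF e])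
  define m where "m = DIM('e) - 1"
  have Sm: "Suc m = DIM('e)" by (simp add: m_def)
  have kN: "Suc m < DIM('e \<times> real)" by (simp add: Sm)
  have SphN: "Sph (Suc m) = sphere 0 1"
    unfolding Sph_def Sm using Sp_iff[of "Suc DIM('e)"] by auto
  define G where "G z = (F z /\<^sub>R norm (F z), 0::real)" for z
  have cG: "continuous_on (Sph (Suc m)) G"
    unfolding SphN G_def using nz by (intro continuous_intros cF) auto
  have oG: "G (-y) = - G y" if "y \<in> Sph (Suc m)" for y
    using oF that by (simp add: G_def SphN)
  have imG: "G ` Sph (Suc m) \<subseteq> Sph m"
  proof
    fix w assume "w \<in> G ` Sph (Suc m)"
    then obtain z where z: "z \<in> sphere 0 1" "w = G z" using SphN by auto
    have "norm w = 1" using z nz by (auto simp: G_def)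
    then have "w \<in> Sph (Suc m)" by (simp add: SphN)
    moreover have "w \<bullet> b (Suc m) = 0" using z by (simp add: G_def b_def Sm inner_Pair)
    ultimately show "w \<in> Sph m" by (rule Sph_lower[OF kN])
  qed
  show False by (rule BU_core[OF kN cG imG oG])
qed



definition hs :: "'a::euclidean_space \<Rightarrow> real \<Rightarrow> 'a set" where "hs a c = {x. a \<bullet> x \<le> c}"

lemma closed_hs: "closed (hs a c)"
  unfolding hs_def by (rule closed_halfspace_le)

lemma hyper_null:
  fixes a :: "'a::euclidean_space"
  assumes "a \<noteq> 0 \<or> c \<noteq> 0"
  shows "{x. a \<bullet> x = c} \<in> null_sets lborel"
proof -
  have s: "{x. a \<bullet> x = c} \<in> sets lborel"
    by (simp add: borel_closed closed_hyperplane)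
  have "{x. a \<bullet> x = c} \<in> null_sets lebesgue"
    using negligible_hyperplane[OF assms] by (simp add: negligible_iff_null_sets)
  then show ?thesis using null_sets_completion_iff[OF s] by simp
qed

lemma adm_null: "admissible_measure \<mu> \<Longrightarrow> N \<in> null_sets lborel \<Longrightarrow> N \<in> null_sets \<mu>"
  by (auto simp: admissible_measure_def absolutely_continuous_def)

lemma adm_AE_hyper:
  fixes a :: "'a::euclidean_space"
  assumes "admissible_measure \<mu>" "a \<noteq> 0 \<or> c \<noteq> 0"
  shows "AE x in \<mu>. a \<bullet> x \<noteq> c"
proof -
  have "{x. a \<bullet> x = c} \<in> null_sets \<mu>" using adm_null[OF assms(1) hyper_null[OF assms(2)]] .
  then have "AE x in \<mu>. x \<notin> {x. a \<bullet> x = c}" by (rule AE_not_in)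
  then show ?thesis by simp
qed

lemma adm_closed_sets: "admissible_measure \<mu> \<Longrightarrow> closed A \<Longrightarrow> A \<in> sets \<mu>"
  by (simp add: admissible_measure_def borel_closed)

lemma adm_space: "admissible_measure \<mu> \<Longrightarrow> space \<mu> = UNIV"
  by (metis admissible_measure_def sets_eq_imp_space_eq space_borel)

lemma MC:
  assumes M: "prob_space M" and A: "\<And>n. A n \<in> sets M" and B: "B \<in> sets M"
    and ev: "AE x in M. eventually (\<lambda>n. x \<in> A n \<longleftrightarrow> x \<in> B) sequentially"
  shows "(\<lambda>n. measure M (A n)) \<longlonglongrightarrow> measure M B"
proof -
  interpret prob_space M by (rule M)
  have "(\<lambda>n. integral\<^sup>L M (indicator (A n) :: _ \<Rightarrow> real)) \<longlonglongrightarrow> integral\<^sup>L M (indicator B)"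
  proof (rule integral_dominated_convergence[where w = "\<lambda>_. 1"])
    show "indicator B \<in> borel_measurable M" using B by (rule borel_measurable_indicator)
    show "indicator (A n) \<in> borel_measurable M" for n using A by (rule borel_measurable_indicator)
    show "integrable M (\<lambda>_. 1::real)" by (rule integrable_const)
    show "AE x in M. (\<lambda>n. indicator (A n) x :: real) \<longlonglongrightarrow> indicator B x"
      using ev
    proof (rule AE_mp[OF _ AE_I2], intro impI)
      fix x assume "eventually (\<lambda>n. x \<in> A n \<longleftrightarrow> x \<in> B) sequentially"
      then have "eventually (\<lambda>n. indicator B x = (indicator (A n) x :: real)) sequentially"
        by (rule eventually_mono) (simp add: indicator_def)
      then show "(\<lambda>n. indicator (A n) x :: real) \<longlonglongrightarrow> indicator B x"
        by (rule Lim_transform_eventually[OF tendsto_const])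
    qed
    show "AE x in M. norm (indicator (A n) x :: real) \<le> 1" for n
      by (auto simp: indicator_def)
  qed
  moreover have "integral\<^sup>L M (indicator (A n)) = measure M (A n)" for n
  proof -
    have e: "A n \<inter> space M = A n" using sets.sets_into_space[OF A] by blast
    have "integral\<^sup>L M (indicator (A n)) = measure M (A n \<inter> space M)"
      by (rule Bochner_Integration.integral_indicator)
    then show ?thesis by (simp only: e)
  qed
  moreover have "integral\<^sup>L M (indicator B) = measure M B"
  proof -
    have e: "B \<inter> space M = B" using sets.sets_into_space[OF B] by blast
    have "integral\<^sup>L M (indicator B) = measure M (B \<inter> space M)"
      by (rule Bochner_Integration.integral_indicator)
    then show ?thesis by (simp only: e)
  qed
  ultimately show ?thesis by simp
qed

definition aa :: "real \<Rightarrow> real" where "aa t = 4 * t * (1 - t)"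
definition bb :: "real \<Rightarrow> real" where "bb t = 1 - 2 * t"

definition Pz :: "'a::euclidean_space \<Rightarrow> ('a \<times> real) \<times> real \<Rightarrow> 'a set" where
  "Pz e0 z = hs (fst (fst z)) (snd (fst z)) \<inter> hs (aa (snd z) *\<^sub>R e0) (bb (snd z))"

lemma aabb_nz: "aa t \<noteq> 0 \<or> bb t \<noteq> 0"
  by (auto simp: aa_def bb_def)

lemma ev_lemma:
  fixes P Q :: "nat \<Rightarrow> real"
  assumes pn: "P \<longlonglongrightarrow> p" and qn: "Q \<longlonglongrightarrow> q"
    and q0: "q \<noteq> 0" and pq: "p \<noteq> 0 \<or> q > 0"
  shows "eventually (\<lambda>n. (P n \<le> 0 \<and> Q n \<le> 0) \<longleftrightarrow> (p \<le> 0 \<and> q \<le> 0)) sequentially"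
proof (cases "q > 0")
  case True
  then have "eventually (\<lambda>n. 0 < Q n) sequentially" using order_tendstoD(1)[OF qn] by blast
  then show ?thesis by (rule eventually_mono) (use True in auto)
next
  case False
  then have q: "q < 0" using q0 by simp
  then have e1: "eventually (\<lambda>n. Q n < 0) sequentially" using order_tendstoD(2)[OF qn] by blast
  show ?thesis
  proof (cases "p > 0")
    case True
    then have "eventually (\<lambda>n. 0 < P n) sequentially" using order_tendstoD(1)[OF pn] by blast
    then show ?thesis by (rule eventually_mono) (use True in auto)
  next
    case False
    then have "p < 0" using pq q by auto
    then have "eventually (\<lambda>n. P n < 0) sequentially" using order_tendstoD(2)[OF pn] by blast
    then show ?thesis using e1 by eventually_elim (use \<open>p < 0\<close> q in auto)
  qed
qed

lemma cont_f:
  fixes \<mu> :: "'a::euclidean_space measure"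
  assumes adm: "admissible_measure \<mu>" and e0: "e0 \<noteq> 0"
  shows "continuous_on {z \<in> sphere (0::('a \<times> real) \<times> real) 1. 0 \<le> snd z} (\<lambda>z. measure \<mu> (Pz e0 z))"
proof (rule continuous_on_sequentiallyI)
  fix u and z :: "('a \<times> real) \<times> real"
  assume uU: "\<forall>n. u n \<in> {z \<in> sphere 0 1. 0 \<le> snd z}" and zU: "z \<in> {z \<in> sphere 0 1. 0 \<le> snd z}"
    and lim: "u \<longlonglongrightarrow> z"
  have P: "prob_space \<mu>" using adm by (simp add: admissible_measure_def)
  define a where "a = fst (fst z)"
  define c where "c = snd (fst z)"
  define t where "t = snd z"
  have la: "(\<lambda>n. fst (fst (u n))) \<longlonglongrightarrow> a" unfolding a_def by (intro tendsto_intros lim)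
  have lc: "(\<lambda>n. snd (fst (u n))) \<longlonglongrightarrow> c" unfolding c_def by (intro tendsto_intros lim)
  have lt: "(\<lambda>n. snd (u n)) \<longlonglongrightarrow> t" unfolding t_def by (intro tendsto_intros lim)
  have ev: "eventually (\<lambda>n. x \<in> Pz e0 (u n) \<longleftrightarrow> x \<in> Pz e0 z) sequentially"
    if x1: "(aa t *\<^sub>R e0) \<bullet> x \<noteq> bb t" and x2: "a \<bullet> x \<noteq> c \<or> (aa t *\<^sub>R e0) \<bullet> x > bb t" for x
  proof -
    have pn: "(\<lambda>n. fst (fst (u n)) \<bullet> x - snd (fst (u n))) \<longlonglongrightarrow> a \<bullet> x - c"
      by (intro tendsto_intros la lc)
    have qn: "(\<lambda>n. (aa (snd (u n)) *\<^sub>R e0) \<bullet> x - bb (snd (u n))) \<longlonglongrightarrow> (aa t *\<^sub>R e0) \<bullet> x - bb t"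
      unfolding aa_def bb_def by (intro tendsto_intros lt)
    have "eventually (\<lambda>n. (fst (fst (u n)) \<bullet> x - snd (fst (u n)) \<le> 0 \<and> (aa (snd (u n)) *\<^sub>R e0) \<bullet> x - bb (snd (u n)) \<le> 0)
       \<longleftrightarrow> (a \<bullet> x - c \<le> 0 \<and> (aa t *\<^sub>R e0) \<bullet> x - bb t \<le> 0)) sequentially"
      by (rule ev_lemma[OF pn qn]) (use x1 x2 in auto)
    then show ?thesis
      by (rule eventually_mono) (simp add: Pz_def hs_def a_def c_def t_def)
  qed
  have AE1: "AE x in \<mu>. (aa t *\<^sub>R e0) \<bullet> x \<noteq> bb t"
    by (rule adm_AE_hyper[OF adm]) (use aabb_nz[of t] e0 in auto)
  have AE2: "AE x in \<mu>. a \<bullet> x \<noteq> c \<or> (aa t *\<^sub>R e0) \<bullet> x > bb t"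
  proof (cases "a \<noteq> 0 \<or> c \<noteq> 0")
    case True
    show ?thesis using adm_AE_hyper[OF adm True] by eventually_elim auto
  next
    case False
    then have a0: "a = 0" "c = 0" by auto
    have "norm z = 1" using zU by simp
    then have "sqrt (norm (fst z) ^ 2 + (norm (snd z))^2) = 1" using norm_Pair[of "fst z" "snd z"] by simp
    then have "norm (fst z) ^ 2 + t ^ 2 = 1" by (simp add: t_def)
    moreover have "norm (fst z) = 0" using a0 by (simp add: a_def c_def norm_Pair prod_eq_iff)
    ultimately have "t ^ 2 = 1" by simp
    moreover have "0 \<le> t" using zU by (simp add: t_def)
    ultimately have "t = 1" by (simp add: power2_eq_1_iff)
    then show ?thesis by (simp add: aa_def bb_def)
  qed
  have AE: "AE x in \<mu>. eventually (\<lambda>n. x \<in> Pz e0 (u n) \<longleftrightarrow> x \<in> Pz e0 z) sequentially"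
    using AE1 AE2 by eventually_elim (rule ev)
  have cl: "closed (Pz e0 y)" for y by (simp add: Pz_def closed_hs closed_Int)
  show "(\<lambda>n. measure \<mu> (Pz e0 (u n))) \<longlonglongrightarrow> measure \<mu> (Pz e0 z)"
    by (rule MC[OF P adm_closed_sets[OF adm cl] adm_closed_sets[OF adm cl] AE])
qed



lemma compl_meas:
  assumes adm: "admissible_measure \<mu>" and cA: "closed A" and cB: "closed B"
    and U: "A \<union> B = UNIV" and N: "A \<inter> B \<subseteq> N" and Nn: "N \<in> null_sets \<mu>"
  shows "measure \<mu> A + measure \<mu> B = 1"
proof -
  interpret prob_space \<mu> using adm by (simp add: admissible_measure_def)
  have sA: "A \<in> sets \<mu>" and sB: "B \<in> sets \<mu>" using adm_closed_sets[OF adm] cA cB by auto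
  have "measure \<mu> (A \<union> B) = measure \<mu> A + measure \<mu> B - measure \<mu> (A \<inter> B)"
    by (rule measure_Un3) (simp_all add: fmeasurable_eq_sets sA sB)
  moreover have "A \<inter> B \<in> null_sets \<mu>" by (rule null_sets_subset[OF Nn _ N]) (use sA sB in auto)
  then have "measure \<mu> (A \<inter> B) = 0" by (rule measure_eq_0_null_sets)
  moreover have "measure \<mu> (A \<union> B) = 1" using prob_space adm_space[OF adm] U by simp
  ultimately show ?thesis by simp
qed

lemma hs_neg: "hs (- a) (- c) = {x. c \<le> a \<bullet> x}"
  by (auto simp: hs_def)

lemma meas_halves:
  assumes adm: "admissible_measure \<mu>" and nz: "a \<noteq> 0 \<or> c \<noteq> 0"
  shows "measure \<mu> (hs a c) + measure \<mu> (hs (- a) (- c)) = 1"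
proof (rule compl_meas[OF adm closed_hs closed_hs])
  show "hs a c \<union> hs (- a) (- c) = UNIV" by (auto simp: hs_def)
  show "hs a c \<inter> hs (- a) (- c) \<subseteq> {x. a \<bullet> x = c}" by (auto simp: hs_def)
  show "{x. a \<bullet> x = c} \<in> null_sets \<mu>" by (rule adm_null[OF adm hyper_null[OF nz]])
qed

lemma hs_pair: "a \<noteq> 0 \<or> c \<noteq> 0 \<Longrightarrow> halfspace_pair (hs a c) (hs (- a) (- c))"
proof -
  assume nz: "a \<noteq> 0 \<or> c \<noteq> 0"
  show ?thesis
  proof (cases "a = 0")
    case False
    have "\<exists>a' b'. a' \<noteq> 0 \<and> hs a c = {x. a' \<bullet> x \<le> b'} \<and> hs (-a) (-c) = {x. b' \<le> a' \<bullet> x}"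
      by (rule exI[of _ a], rule exI[of _ c]) (use False in \<open>simp add: hs_def hs_neg\<close>)
    then show ?thesis unfolding halfspace_pair_def by blast
  next
    case True
    then have "c \<noteq> 0" using nz by simp
    then show ?thesis unfolding halfspace_pair_def using True by (cases "c < 0") (auto simp: hs_def)
  qed
qed

lemma lt3: "(i::nat) < 3 \<longleftrightarrow> i = 0 \<or> i = 1 \<or> i = 2" by presburger

lemma set3_0: "{f i | i. i < (3::nat) \<and> (if i = 0 then 0 else 1::nat) = 0} = {f 0}"
  by (auto simp: lt3 split: if_splits)

lemma set3_1: "{f i | i. i < (3::nat) \<and> (if i = 0 then 0 else 1::nat) = 1} = {f 1, f 2}"
proof
  show "{f i | i. i < (3::nat) \<and> (if i = 0 then 0 else 1::nat) = 1} \<subseteq> {f 1, f 2}"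
    by (auto simp: lt3 split: if_splits)
  have "f 1 \<in> {f i | i. i < (3::nat) \<and> (if i = 0 then 0 else 1::nat) = 1}"
    unfolding mem_Collect_eq by (rule exI[of _ 1]) simp
  moreover have "f 2 \<in> {f i | i. i < (3::nat) \<and> (if i = 0 then 0 else 1::nat) = 1}"
    unfolding mem_Collect_eq by (rule exI[of _ 2]) simp
  ultimately show "{f 1, f 2} \<subseteq> {f i | i. i < (3::nat) \<and> (if i = 0 then 0 else 1::nat) = 1}" by blast
qed

lemma inner_enum_sum:
  fixes c :: "nat \<Rightarrow> 'b::euclidean_space"
  assumes c: "bij_betw c {..<DIM('b)} Basis" and j: "j < DIM('b)"
  shows "(\<Sum>k<DIM('b). g k *\<^sub>R c k) \<bullet> c j = g j"
proof -
  have ci: "c k \<bullet> c j = (if k = j then 1 else 0)" if "k < DIM('b)" for k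
  proof -
    have "c k \<in> Basis" "c j \<in> Basis" using c that j by (auto simp: bij_betw_def)
    moreover have "c k = c j \<longleftrightarrow> k = j" using c that j by (auto simp: bij_betw_def inj_on_def)
    ultimately show ?thesis by (auto simp: inner_Basis)
  qed
  have "(\<Sum>k<DIM('b). g k *\<^sub>R c k) \<bullet> c j = (\<Sum>k<DIM('b). g k * (if k = j then 1 else 0))"
    by (simp add: inner_sum_left ci)
  also have "\<dots> = g j" using j by (simp add: if_distrib cong: if_cong)
  finally show ?thesis .
qed

lemma lower_bound:
  fixes \<mu> :: "nat \<Rightarrow> 'a::euclidean_space measure"
  assumes adm: "\<And>j. j < Suc DIM('a) \<Longrightarrow> admissible_measure (\<mu> j)"
  shows "\<exists>Ks (lab::nat \<Rightarrow> nat). iter_cut Ks \<and> length Ks = 3 \<and> (\<forall>i<3. lab i < 2) \<and>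
           (\<forall>j<Suc DIM('a). \<forall>s<2. measure (\<mu> j) (\<Union>{Ks ! i | i. i < 3 \<and> lab i = s}) = 1 / real 2)"
proof -
  obtain e0 :: 'a where e0: "e0 \<in> Basis" using nonempty_Basis by blast
  then have e0nz: "e0 \<noteq> 0" by auto
  define U where "U = {z \<in> sphere (0::('a \<times> real) \<times> real) 1. 0 \<le> snd z}"
  define f where "f j z = measure (\<mu> j) (Pz e0 z) - 1/2" for j z
  have cf: "continuous_on U (f j)" if "j < Suc DIM('a)" for j
    unfolding f_def U_def by (intro continuous_intros cont_f[OF adm[OF that] e0nz])
  have key0: "f j z + f j (-z) = 0" if z: "z \<in> sphere 0 1" "snd z = 0" and j: "j < Suc DIM('a)" for j z
  proof -
    have "fst z \<noteq> 0"
    proof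
      assume "fst z = 0"
      then have "z = 0" using z(2) by (simp add: prod_eq_iff)
      then show False using z(1) by simp
    qed
    then have nz: "fst (fst z) \<noteq> 0 \<or> snd (fst z) \<noteq> 0" by (simp add: prod_eq_iff)
    have u: "hs (aa 0 *\<^sub>R e0) (bb 0) = UNIV" by (simp add: hs_def aa_def bb_def)
    have "Pz e0 z = hs (fst (fst z)) (snd (fst z))" using z(2) u by (simp add: Pz_def)
    moreover have "Pz e0 (-z) = hs (- fst (fst z)) (- snd (fst z))" using z(2) u by (simp add: Pz_def)
    ultimately show ?thesis using meas_halves[OF adm[OF j] nz] by (simp add: f_def)
  qed
  define g where "g j z = (if snd z \<le> 0 then - f j (-z) else f j z)" for j z
  have cg: "continuous_on (sphere 0 1) (g j)" if j: "j < Suc DIM('a)" for j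
    unfolding g_def
  proof (rule continuous_on_cases_le)
    have "continuous_on {x \<in> sphere (0::('a \<times> real) \<times> real) 1. snd x \<le> 0} (\<lambda>x. f j (- x))"
    proof (rule continuous_on_compose2[OF cf[OF j]])
      show "continuous_on {x \<in> sphere (0::('a \<times> real) \<times> real) 1. snd x \<le> 0} uminus"
        by (intro continuous_intros)
      show "uminus ` {x \<in> sphere (0::('a \<times> real) \<times> real) 1. snd x \<le> 0} \<subseteq> U"
        unfolding U_def by (simp add: image_subset_iff)
    qed
    then show "continuous_on {x \<in> sphere (0::('a \<times> real) \<times> real) 1. snd x \<le> 0} (\<lambda>x. - f j (- x))"
      by (intro continuous_intros)
    show "continuous_on {x \<in> sphere (0::('a \<times> real) \<times> real) 1. 0 \<le> snd x} (f j)"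
      using cf[OF j] by (simp add: U_def)
    show "continuous_on (sphere (0::('a \<times> real) \<times> real) 1) snd" by (intro continuous_intros)
    show "- f j (- x) = f j x" if "x \<in> sphere 0 1" "snd x = 0" for x
      using key0[OF that j] by simp
  qed
  have godd: "g j (-z) = - g j z" if z: "z \<in> sphere 0 1" and j: "j < Suc DIM('a)" for j z
  proof (cases "snd z = 0")
    case True
    then show ?thesis using key0[OF z True j] by (simp add: g_def)
  next
    case False
    then show ?thesis by (auto simp: g_def)
  qed
  obtain c :: "nat \<Rightarrow> 'a \<times> real" where c: "bij_betw c {..<DIM('a \<times> real)} Basis"
    using ex_bij_betw_nat_finite[of "Basis :: ('a \<times> real) set"] by (auto simp: atLeast0LessThan)
  have Dim: "DIM('a \<times> real) = Suc DIM('a)" by simp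
  define F where "F z = (\<Sum>j<DIM('a \<times> real). g j z *\<^sub>R c j)" for z
  have cF: "continuous_on (sphere 0 1) F"
    unfolding F_def using cg by (intro continuous_intros) (auto simp: Dim)
  have oF: "F (-z) = - F z" if "z \<in> sphere 0 1" for z
    unfolding F_def using godd[OF that] by (simp add: Dim sum_negf)
  obtain z where zS: "z \<in> sphere 0 1" and Fz: "F z = 0"
    using borsuk_ulam[OF cF oF] by blast
  have gz: "g j z = 0" if j: "j < Suc DIM('a)" for j
    using inner_enum_sum[OF c, of j "\<lambda>k. g k z"] Fz j by (simp add: F_def Dim)
  obtain w where wU: "w \<in> U" and wh: "\<And>j. j < Suc DIM('a) \<Longrightarrow> measure (\<mu> j) (Pz e0 w) = 1/2"
  proof (cases "snd z \<le> 0")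
    case True
    show ?thesis
    proof (rule that[of "-z"])
      show "- z \<in> U" using zS True by (simp add: U_def)
      show "measure (\<mu> j) (Pz e0 (- z)) = 1 / 2" if "j < Suc DIM('a)" for j
        using gz[OF that] True by (simp add: g_def f_def)
    qed
  next
    case False
    show ?thesis
    proof (rule that[of z])
      show "z \<in> U" using zS False by (simp add: U_def)
      show "measure (\<mu> j) (Pz e0 z) = 1 / 2" if "j < Suc DIM('a)" for j
        using gz[OF that] False by (simp add: g_def f_def)
    qed
  qed
  define a where "a = fst (fst w)"
  define c' where "c' = snd (fst w)"
  define t where "t = snd w"
  define \<gamma> where "\<gamma> = aa t *\<^sub>R e0"
  define \<delta> where "\<delta> = bb t"
  have Pw: "Pz e0 w = hs a c' \<inter> hs \<gamma> \<delta>" by (simp add: Pz_def a_def c'_def t_def \<gamma>_def \<delta>_def)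
  have gd: "\<gamma> \<noteq> 0 \<or> \<delta> \<noteq> 0" using aabb_nz[of t] e0nz by (auto simp: \<gamma>_def \<delta>_def)
  have ac: "a \<noteq> 0 \<or> c' \<noteq> 0"
  proof (rule ccontr)
    assume "\<not> (a \<noteq> 0 \<or> c' \<noteq> 0)"
    then have a0: "a = 0" "c' = 0" by auto
    have "norm w = 1" using wU by (simp add: U_def)
    then have "sqrt (norm (fst w) ^ 2 + (norm (snd w))^2) = 1" using norm_Pair[of "fst w" "snd w"] by simp
    then have "norm (fst w) ^ 2 + t ^ 2 = 1" by (simp add: t_def)
    moreover have "norm (fst w) = 0" using a0 by (simp add: a_def c'_def prod_eq_iff)
    ultimately have "t ^ 2 = 1" by simp
    moreover have "0 \<le> t" using wU by (simp add: t_def U_def)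
    ultimately have "t = 1" by (simp add: power2_eq_1_iff)
    then have "hs \<gamma> \<delta> = {}" by (simp add: hs_def \<gamma>_def \<delta>_def aa_def bb_def)
    then have "measure (\<mu> 0) (Pz e0 w) = 0" using Pw by simp
    then show False using wh[of 0] by simp
  qed
  define K0 where "K0 = hs \<gamma> \<delta> \<inter> hs a c'"
  define K1 where "K1 = hs (- \<gamma>) (- \<delta>)"
  define K2 where "K2 = hs \<gamma> \<delta> \<inter> hs (- a) (- c')"
  have i1: "iter_cut ([UNIV][0 := [UNIV] ! 0 \<inter> hs \<gamma> \<delta>] @ [[UNIV] ! 0 \<inter> hs (- \<gamma>) (- \<delta>)])"
    by (rule iter_cut.cut[OF iter_cut.start _ hs_pair[OF gd]]) simp
  then have i1': "iter_cut [hs \<gamma> \<delta>, hs (- \<gamma>) (- \<delta>)]" by simp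
  have i2: "iter_cut ([hs \<gamma> \<delta>, hs (- \<gamma>) (- \<delta>)][0 := [hs \<gamma> \<delta>, hs (- \<gamma>) (- \<delta>)] ! 0 \<inter> hs a c']
                       @ [[hs \<gamma> \<delta>, hs (- \<gamma>) (- \<delta>)] ! 0 \<inter> hs (- a) (- c')])"
    by (rule iter_cut.cut[OF i1' _ hs_pair[OF ac]]) simp
  then have iK: "iter_cut [K0, K1, K2]" by (simp add: K0_def K1_def K2_def)
  define lab :: "nat \<Rightarrow> nat" where "lab = (\<lambda>i. if i = 0 then 0 else 1)"
  have U0: "\<Union>{[K0, K1, K2] ! i | i. i < 3 \<and> lab i = 0} = K0"
    using set3_0[of "\<lambda>i. [K0, K1, K2] ! i"] by (simp add: lab_def)
  have U1: "\<Union>{[K0, K1, K2] ! i | i. i < 3 \<and> lab i = 1} = K1 \<union> K2"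
    using set3_1[of "\<lambda>i. [K0, K1, K2] ! i"] by (simp add: lab_def)
  have mK0: "measure (\<mu> j) K0 = 1/2" if "j < Suc DIM('a)" for j
    using wh[OF that] Pw by (simp add: K0_def Int_commute)
  have mK12: "measure (\<mu> j) K0 + measure (\<mu> j) (K1 \<union> K2) = 1" if j: "j < Suc DIM('a)" for j
  proof (rule compl_meas[OF adm[OF j]])
    show "closed K0" by (simp add: K0_def closed_hs closed_Int)
    show "closed (K1 \<union> K2)" by (simp add: K1_def K2_def closed_hs closed_Int closed_Un)
    show "K0 \<union> (K1 \<union> K2) = UNIV" by (auto simp: K0_def K1_def K2_def hs_def)
    show "K0 \<inter> (K1 \<union> K2) \<subseteq> {x. \<gamma> \<bullet> x = \<delta>} \<union> {x. a \<bullet> x = c'}"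
      by (auto simp: K0_def K1_def K2_def hs_def)
    show "{x. \<gamma> \<bullet> x = \<delta>} \<union> {x. a \<bullet> x = c'} \<in> null_sets (\<mu> j)"
      using adm_null[OF adm[OF j] hyper_null[OF gd]] adm_null[OF adm[OF j] hyper_null[OF ac]] by auto
  qed
  show ?thesis
  proof (intro exI conjI allI impI)
    show "iter_cut [K0, K1, K2]" by (rule iK)
    show "length [K0, K1, K2] = 3" by simp
    show "lab i < 2" for i by (simp add: lab_def)
    fix j s :: nat assume j: "j < Suc DIM('a)" and s: "s < 2"
    then have "s = 0 \<or> s = 1" by auto
    then show "measure (\<mu> j) (\<Union>{[K0, K1, K2] ! i | i. i < 3 \<and> lab i = s}) = 1 / real 2"
    proof
      assume "s = 0" then show ?thesis using U0 mK0[OF j] by simp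
    next
      assume "s = 1" then show ?thesis using U1 mK0[OF j] mK12[OF j] by simp
    qed
  qed
qed



definition polyh :: "'a::euclidean_space set \<Rightarrow> bool" where
  "polyh K \<longleftrightarrow> (\<exists>C. K = {x. \<forall>p\<in>C. fst p \<bullet> x \<le> snd p})"

lemma polyh_UNIV: "polyh UNIV"
  unfolding polyh_def by (rule exI[of _ "{}"]) simp

lemma polyh_empty: "polyh ({} :: 'a::euclidean_space set)"
  unfolding polyh_def by (rule exI[of _ "{(0, -1)}"]) simp

lemma polyh_half: "polyh {x. a \<bullet> x \<le> b}"
  unfolding polyh_def by (rule exI[of _ "{(a, b)}"]) simp

lemma polyh_half': "polyh {x. b \<le> a \<bullet> x}"
  unfolding polyh_def by (rule exI[of _ "{(-a, -b)}"]) auto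

lemma polyh_Int: "polyh A \<Longrightarrow> polyh B \<Longrightarrow> polyh (A \<inter> B)"
proof -
  assume "polyh A" "polyh B"
  then obtain C D where "A = {x. \<forall>p\<in>C. fst p \<bullet> x \<le> snd p}" "B = {x. \<forall>p\<in>D. fst p \<bullet> x \<le> snd p}"
    by (auto simp: polyh_def)
  then have "A \<inter> B = {x. \<forall>p\<in>C \<union> D. fst p \<bullet> x \<le> snd p}" by auto
  then show ?thesis unfolding polyh_def by blast
qed

lemma polyh_pair: "halfspace_pair H1 H2 \<Longrightarrow> polyh H1 \<and> polyh H2"
  unfolding halfspace_pair_def using polyh_half polyh_half' polyh_UNIV polyh_empty by blast

lemma iter_cut_polyh: "iter_cut Ks \<Longrightarrow> \<forall>K\<in>set Ks. polyh K"
proof (induction rule: iter_cut.induct)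
  case start
  then show ?case by (simp add: polyh_UNIV)
next
  case (cut Ks i H1 H2)
  have Ki: "polyh (Ks ! i)" using cut.IH cut.hyps(2) by auto
  have "polyh (Ks ! i \<inter> H1)" "polyh (Ks ! i \<inter> H2)"
    using polyh_Int[OF Ki] polyh_pair[OF cut.hyps(3)] by auto
  moreover have "set (Ks[i := Ks ! i \<inter> H1]) \<subseteq> insert (Ks ! i \<inter> H1) (set Ks)"
    by (rule set_update_subset_insert)
  ultimately show ?case using cut.IH by auto
qed

lemma small_class:
  fixes lab :: "nat \<Rightarrow> nat"
  assumes "\<forall>i<3. lab i < 2"
  shows "\<exists>s<2. \<exists>i<3. \<forall>k<3. lab k = s \<longrightarrow> k = i"
proof -
  have l: "lab 0 < 2" "lab 1 < 2" "lab 2 < 2" using assms by auto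
  have lt3: "\<And>k::nat. k < 3 \<longleftrightarrow> k = 0 \<or> k = 1 \<or> k = 2" by presburger
  show ?thesis
  proof (cases "lab 0 = lab 1")
    case True
    then have "lab 2 = lab 0 \<or> lab 2 \<noteq> lab 0" by simp
    show ?thesis
      by (rule exI[of _ "1 - lab 0"]) (use l True in \<open>auto simp: lt3 intro!: exI[of _ 2]\<close>; arith)
  next
    case False
    show ?thesis
    proof (cases "lab 2 = lab 0")
      case True
      show ?thesis by (rule exI[of _ "lab 1"]) (use l True False in \<open>auto simp: lt3 intro!: exI[of _ 1]\<close>)
    next
      case False2: False
      show ?thesis by (rule exI[of _ "lab 0"]) (use l False2 False in \<open>auto simp: lt3 intro!: exI[of _ 0]\<close>)
    qed
  qed
qed

lemma class_polyh:
  assumes "iter_cut Ks" "length Ks = 3" "\<forall>i<3. lab i < (2::nat)"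
  shows "\<exists>s<2. polyh (\<Union>{Ks ! i | i. i < 3 \<and> lab i = s})"
proof -
  obtain s i where s: "s < 2" and i: "i < 3" and u: "\<forall>k<3. lab k = s \<longrightarrow> k = i"
    using small_class[OF assms(3)] by blast
  have sub: "{Ks ! k | k. k < 3 \<and> lab k = s} \<subseteq> {Ks ! i}" using u by auto
  then have "{Ks ! k | k. k < 3 \<and> lab k = s} = {} \<or> {Ks ! k | k. k < 3 \<and> lab k = s} = {Ks ! i}"
    by blast
  moreover have "polyh (Ks ! i)" using iter_cut_polyh[OF assms(1)] i assms(2) by auto
  ultimately have "polyh (\<Union>{Ks ! k | k. k < 3 \<and> lab k = s})"
  proof (elim disjE)
    assume "{Ks ! k | k. k < 3 \<and> lab k = s} = {}"
    then show ?thesis by (simp only: Union_empty polyh_empty)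
  next
    assume "{Ks ! k | k. k < 3 \<and> lab k = s} = {Ks ! i}" "polyh (Ks ! i)"
    then show ?thesis by (simp only: cSup_singleton)
  qed
  then show ?thesis using s by blast
qed

lemma polyh_closed: "polyh K \<Longrightarrow> closed K"
proof -
  assume "polyh K"
  then obtain C where K: "K = {x. \<forall>p\<in>C. fst p \<bullet> x \<le> snd p}" by (auto simp: polyh_def)
  have eq: "K = (\<Inter>p\<in>C. {x. fst p \<bullet> x \<le> snd p})" using K by auto
  have "closed (\<Inter>p\<in>C. {x. fst p \<bullet> x \<le> snd p})"
    by (intro closed_INT ballI closed_halfspace_le)
  then show ?thesis using eq by simp
qed

lemma cube_bound:
  fixes a v x :: "'a::euclidean_space"
  assumes x: "x \<in> cbox (v - One) (v + One)"
  shows "\<bar>a \<bullet> (x - v)\<bar> \<le> (\<Sum>i\<in>Basis. \<bar>a \<bullet> i\<bar>)"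
proof -
  have xi: "\<bar>(x - v) \<bullet> i\<bar> \<le> 1" if i: "i \<in> Basis" for i
  proof -
    have "(v - One) \<bullet> i \<le> x \<bullet> i" "x \<bullet> i \<le> (v + One) \<bullet> i" using x i by (simp_all add: mem_box)
    then have "v \<bullet> i - 1 \<le> x \<bullet> i" "x \<bullet> i \<le> v \<bullet> i + 1" using i by (simp_all add: inner_diff_left inner_add_left)
    then show ?thesis by (simp add: inner_diff_left abs_le_iff)
  qed
  have "a \<bullet> (x - v) = (\<Sum>i\<in>Basis. (a \<bullet> i) * ((x - v) \<bullet> i))" by (rule euclidean_inner)
  then have "\<bar>a \<bullet> (x - v)\<bar> = \<bar>\<Sum>i\<in>Basis. (a \<bullet> i) * ((x - v) \<bullet> i)\<bar>" by (rule arg_cong)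
  also have "\<dots> \<le> (\<Sum>i\<in>Basis. \<bar>(a \<bullet> i) * ((x - v) \<bullet> i)\<bar>)" by (rule sum_abs)
  also have "\<dots> \<le> (\<Sum>i\<in>Basis. \<bar>a \<bullet> i\<bar>)"
  proof (rule sum_mono)
    fix i :: 'a assume "i \<in> Basis"
    then have "\<bar>a \<bullet> i\<bar> * \<bar>(x - v) \<bullet> i\<bar> \<le> \<bar>a \<bullet> i\<bar> * 1"
      using xi[of i] by (intro mult_left_mono) auto
    then show "\<bar>(a \<bullet> i) * ((x - v) \<bullet> i)\<bar> \<le> \<bar>a \<bullet> i\<bar>"
      by (simp add: abs_mult)
  qed
  finally show ?thesis .
qed

locale cubes =
  fixes e :: "nat \<Rightarrow> 'a::euclidean_space"
  assumes e: "bij_betw e {..<DIM('a)} Basis"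
begin

definition DD :: real where "DD = 2 * real DIM('a) + 1"

definition v :: "nat \<Rightarrow> 'a" where
  "v j = (if j < DIM('a) then (2 * DD) *\<^sub>R e j
          else if j = DIM('a) then - ((2 * DD) *\<^sub>R (\<Sum>k<DIM('a). e k)) else 0)"

definition Q :: "nat \<Rightarrow> 'a set" where "Q j = cbox (v j - One) (v j + One)"

lemma sum_Basis_e: "(\<Sum>i\<in>Basis. f i) = (\<Sum>k<DIM('a). f (e k))"
  using sum.reindex_bij_betw[OF e, of f] by simp

lemma Gsep:
  assumes y: "y \<in> Q (Suc DIM('a))"
  shows "\<exists>j\<le>DIM('a). \<forall>q\<in>Q j. a \<bullet> y \<le> a \<bullet> q"
proof -
  define T where "T = (\<Sum>i\<in>Basis. \<bar>a \<bullet> i\<bar>)"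
  define \<alpha> where "\<alpha> k = a \<bullet> e k" for k
  have T': "T = (\<Sum>k<DIM('a). \<bar>\<alpha> k\<bar>)" unfolding T_def \<alpha>_def by (rule sum_Basis_e)
  have T0: "0 \<le> T" unfolding T_def by (intro sum_nonneg) auto
  have D: "DD = 2 * real DIM('a) + 1" by (simp add: DD_def)
  have ay: "a \<bullet> y \<le> T"
    using cube_bound[of y 0 a] y by (simp add: Q_def v_def T_def)
  have "\<exists>j\<le>DIM('a). 2 * T \<le> a \<bullet> v j"
  proof (cases "\<exists>k<DIM('a). T \<le> DD * \<alpha> k")
    case True
    then obtain k where k: "k < DIM('a)" "T \<le> DD * \<alpha> k" by blast
    have "a \<bullet> v k = 2 * DD * \<alpha> k" using k by (simp add: v_def \<alpha>_def)
    then show ?thesis using k by (intro exI[of _ k]) auto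
  next
    case False
    then have lt: "DD * \<alpha> k < T" if "k < DIM('a)" for k using that by auto
    define Pp where "Pp = (\<Sum>k<DIM('a). max (\<alpha> k) 0)"
    have "DD * max (\<alpha> k) 0 \<le> T" if "k < DIM('a)" for k
      using lt[OF that] T0 by (cases "\<alpha> k \<le> 0") (simp_all add: max_def)
    then have "(\<Sum>k<DIM('a). DD * max (\<alpha> k) 0) \<le> (\<Sum>k<DIM('a). T)" by (intro sum_mono) auto
    then have DP: "DD * Pp \<le> real DIM('a) * T" by (simp add: Pp_def sum_distrib_left)
    have "(\<Sum>k<DIM('a). - \<alpha> k) = (\<Sum>k<DIM('a). \<bar>\<alpha> k\<bar> - 2 * max (\<alpha> k) 0)"
      by (rule sum.cong) (auto simp: max_def abs_if)
    then have "- (\<Sum>k<DIM('a). \<alpha> k) = (\<Sum>k<DIM('a). \<bar>\<alpha> k\<bar> - 2 * max (\<alpha> k) 0)"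
      by (simp add: sum_negf)
    also have "\<dots> = T - 2 * Pp" by (simp add: T' Pp_def sum_subtractf sum_distrib_left)
    finally have sa: "- (\<Sum>k<DIM('a). \<alpha> k) = T - 2 * Pp" .
    have "a \<bullet> v DIM('a) = 2 * DD * (- (\<Sum>k<DIM('a). \<alpha> k))"
      by (simp add: v_def \<alpha>_def inner_sum_right sum_distrib_left)
    also have "\<dots> = 2 * DD * T - 4 * (DD * Pp)" by (simp add: sa algebra_simps)
    finally have av: "a \<bullet> v DIM('a) = 2 * DD * T - 4 * (DD * Pp)" .
    have "2 * T = 2 * DD * T - 4 * (real DIM('a) * T)" using D by (simp add: algebra_simps)
    then have "2 * T \<le> a \<bullet> v DIM('a)" using av DP by linarith
    then show ?thesis by (intro exI[of _ "DIM('a)"]) auto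
  qed
  then obtain j where j: "j \<le> DIM('a)" "2 * T \<le> a \<bullet> v j" by blast
  have "a \<bullet> y \<le> a \<bullet> q" if q: "q \<in> Q j" for q
  proof -
    have "\<bar>a \<bullet> (q - v j)\<bar> \<le> T" using cube_bound[of q "v j" a] q by (simp add: Q_def T_def)
    then have "a \<bullet> v j - T \<le> a \<bullet> q" by (simp add: inner_diff_right abs_le_iff)
    then show ?thesis using ay j(2) by simp
  qed
  then show ?thesis using j(1) by blast
qed

definition \<mu>u :: "nat \<Rightarrow> 'a measure" where "\<mu>u j = uniform_measure lborel (Q j)"

lemma Q_emeasure: "emeasure lborel (Q j) = ennreal (2 ^ DIM('a))"
proof -
  have "\<forall>b\<in>Basis. (v j - One) \<bullet> b \<le> (v j + One) \<bullet> b" by (simp add: inner_diff_left inner_add_left)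
  moreover have "(\<Prod>b\<in>Basis. ((v j + One) - (v j - One)) \<bullet> b) = (\<Prod>b\<in>(Basis::'a set). 2)"
    by (rule prod.cong) (simp_all add: inner_diff_left inner_add_left)
  ultimately show ?thesis by (simp add: Q_def emeasure_lborel_cbox_eq)
qed

lemma Q_sets: "Q j \<in> sets lborel"
  by (simp add: Q_def)

lemma Q_nz: "emeasure lborel (Q j) \<noteq> 0" and Q_fin: "emeasure lborel (Q j) \<noteq> \<infinity>"
  by (simp_all add: Q_emeasure)

lemma adm_Q: "admissible_measure (\<mu>u j)"
  unfolding admissible_measure_def
proof (intro conjI)
  show "sets (\<mu>u j) = sets borel" by (simp add: \<mu>u_def)
  show "prob_space (\<mu>u j)" unfolding \<mu>u_def by (rule prob_space_uniform_measure[OF Q_nz Q_fin])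
  show "absolutely_continuous lborel (\<mu>u j)"
    unfolding \<mu>u_def uniform_measure_def
    by (rule absolutely_continuousI_density) (use Q_sets in measurable)
qed

lemma meas_disj: "closed K \<Longrightarrow> K \<inter> Q j = {} \<Longrightarrow> measure (\<mu>u j) K = 0"
proof -
  assume K: "closed K" "K \<inter> Q j = {}"
  have "emeasure (\<mu>u j) K = emeasure lborel (Q j \<inter> K) / emeasure lborel (Q j)"
    unfolding \<mu>u_def by (rule emeasure_uniform_measure[OF Q_sets]) (use K in \<open>simp add: borel_closed\<close>)
  also have "\<dots> = 0" using K(2) by (simp add: Int_commute)
  finally show ?thesis by (simp add: measure_def)
qed

lemma meas_sub: "closed K \<Longrightarrow> Q j \<subseteq> K \<Longrightarrow> measure (\<mu>u j) K = 1"
proof -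
  assume K: "closed K" "Q j \<subseteq> K"
  have "emeasure (\<mu>u j) K = emeasure lborel (Q j \<inter> K) / emeasure lborel (Q j)"
    unfolding \<mu>u_def by (rule emeasure_uniform_measure[OF Q_sets]) (use K in \<open>simp add: borel_closed\<close>)
  also have "\<dots> = emeasure lborel (Q j) / emeasure lborel (Q j)" using K(2) by (simp add: Int_absorb2)
  also have "\<dots> = emeasure (\<mu>u j) (Q j)"
    unfolding \<mu>u_def using emeasure_uniform_measure[OF Q_sets Q_sets, of j] by simp
  also have "\<dots> = 1" unfolding \<mu>u_def by (rule emeasure_uniform_measure_1[OF Q_nz Q_fin])
  finally show ?thesis by (simp add: measure_def)
qed

lemma not_fair: "\<not> fair_splittable 3 2 TYPE('a) (DIM('a) + 2)"
proof
  assume "fair_splittable 3 2 TYPE('a) (DIM('a) + 2)"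
  then have "\<exists>Ks (lab::nat\<Rightarrow>nat). iter_cut Ks \<and> length Ks = 3 \<and> (\<forall>i<3. lab i < 2) \<and>
           (\<forall>j<DIM('a) + 2. \<forall>s<(2::nat). measure (\<mu>u j) (\<Union>{Ks ! i | i. i < 3 \<and> lab i = s}) = 1 / real 2)"
  proof -
    have "(\<forall>j<DIM('a) + 2. admissible_measure (\<mu>u j)) \<longrightarrow> (\<exists>Ks (lab::nat\<Rightarrow>nat). iter_cut Ks \<and> length Ks = 3 \<and> (\<forall>i<3. lab i < 2) \<and>
           (\<forall>j<DIM('a) + 2. \<forall>s<(2::nat). measure (\<mu>u j) (\<Union>{Ks ! i | i. i < 3 \<and> lab i = s}) = 1 / real 2))"
      using \<open>fair_splittable 3 2 TYPE('a) (DIM('a) + 2)\<close> unfolding fair_splittable_def by (rule spec)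
    then show ?thesis using adm_Q by simp
  qed
  then obtain Ks and lab :: "nat \<Rightarrow> nat" where iK: "iter_cut Ks" and len: "length Ks = 3" and lab: "\<forall>i<3. lab i < 2"
    and m: "\<And>j s. j < DIM('a) + 2 \<Longrightarrow> s < 2 \<Longrightarrow> measure (\<mu>u j) (\<Union>{Ks ! i | i. i < 3 \<and> lab i = s}) = 1 / 2"
    by auto
  obtain s where s: "s < 2" and pK: "polyh (\<Union>{Ks ! i | i. i < 3 \<and> lab i = s})"
    using class_polyh[OF iK len lab] by blast
  define K where "K = \<Union>{Ks ! i | i. i < 3 \<and> lab i = s}"
  have pK': "polyh K" using pK by (simp add: K_def)
  have cK: "closed K" by (rule polyh_closed[OF pK'])
  have mK: "measure (\<mu>u j) K = 1/2" if "j < DIM('a) + 2" for j using m[OF that s] by (simp add: K_def)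
  have meet: "\<exists>q. q \<in> K \<and> q \<in> Q j" if "j \<le> DIM('a)" for j
  proof (rule ccontr)
    assume "\<not> (\<exists>q. q \<in> K \<and> q \<in> Q j)"
    then have "K \<inter> Q j = {}" by auto
    then have "measure (\<mu>u j) K = 0" by (rule meas_disj[OF cK])
    then show False using mK[of j] that by simp
  qed
  obtain y where y: "y \<in> Q (Suc DIM('a))" "y \<notin> K"
  proof -
    have "\<not> Q (Suc DIM('a)) \<subseteq> K"
    proof
      assume "Q (Suc DIM('a)) \<subseteq> K"
      then have "measure (\<mu>u (Suc DIM('a))) K = 1" by (rule meas_sub[OF cK])
      then show False using mK[of "Suc DIM('a)"] by simp
    qed
    then show ?thesis using that by blast
  qed
  obtain C where C: "K = {x. \<forall>p\<in>C. fst p \<bullet> x \<le> snd p}" using pK' by (auto simp: polyh_def)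
  obtain p where p: "p \<in> C" "snd p < fst p \<bullet> y" using y(2) C by (auto simp: not_le)
  obtain j where j: "j \<le> DIM('a)" and jq: "\<forall>q\<in>Q j. fst p \<bullet> y \<le> fst p \<bullet> q"
    using Gsep[OF y(1), of "fst p"] by blast
  obtain q where q: "q \<in> K" "q \<in> Q j" using meet[OF j] by blast
  have "fst p \<bullet> q \<le> snd p" using q(1) C p(1) by auto
  moreover have "fst p \<bullet> y \<le> fst p \<bullet> q" using jq q(2) by blast
  ultimately show False using p(2) by linarith
qed

end

lemma fair_mono:
  assumes f: "fair_splittable n r (TYPE('a::euclidean_space)) m" and le: "m' \<le> m"
    and nu: "admissible_measure (\<nu> :: 'a measure)"
  shows "fair_splittable n r TYPE('a) m'"
  unfolding fair_splittable_def
proof (intro allI impI)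
  fix \<mu> :: "nat \<Rightarrow> 'a measure" assume adm: "\<forall>j<m'. admissible_measure (\<mu> j)"
  define \<mu>' where "\<mu>' j = (if j < m' then \<mu> j else \<nu>)" for j
  have "\<forall>j<m. admissible_measure (\<mu>' j)" using adm nu by (simp add: \<mu>'_def)
  have ex: "\<exists>Ks lab. iter_cut Ks \<and> length Ks = n \<and> (\<forall>i<n. lab i < r) \<and>
           (\<forall>j<m. \<forall>s<r. measure (\<mu>' j) (\<Union>{Ks ! i | i. i < n \<and> lab i = s}) = 1 / real r)"
  proof -
    have "(\<forall>j<m. admissible_measure (\<mu>' j)) \<longrightarrow> (\<exists>Ks lab. iter_cut Ks \<and> length Ks = n \<and> (\<forall>i<n. lab i < r) \<and>
           (\<forall>j<m. \<forall>s<r. measure (\<mu>' j) (\<Union>{Ks ! i | i. i < n \<and> lab i = s}) = 1 / real r))"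
      using f unfolding fair_splittable_def by (rule spec)
    then show ?thesis using \<open>\<forall>j<m. admissible_measure (\<mu>' j)\<close> by (rule mp)
  qed
  then obtain Ks lab where P: "iter_cut Ks \<and> length Ks = n \<and> (\<forall>i<n. lab i < r) \<and>
           (\<forall>j<m. \<forall>s<r. measure (\<mu>' j) (\<Union>{Ks ! i | i. i < n \<and> lab i = s}) = 1 / real r)"
    by blast
  show "\<exists>Ks lab. iter_cut Ks \<and> length Ks = n \<and> (\<forall>i<n. lab i < r) \<and>
           (\<forall>j<m'. \<forall>s<r. measure (\<mu> j) (\<Union>{Ks ! i | i. i < n \<and> lab i = s}) = 1 / real r)"
  proof (rule exI[of _ Ks], rule exI[of _ lab], intro conjI allI impI)
    show "iter_cut Ks" "length Ks = n" using P by auto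
    show "lab i < r" if "i < n" for i using P that by auto
    fix j s assume j: "j < m'" and s: "s < r"
    then have "j < m" using le by simp
    then have "measure (\<mu>' j) (\<Union>{Ks ! i | i. i < n \<and> lab i = s}) = 1 / real r" using P s by blast
    then show "measure (\<mu> j) (\<Union>{Ks ! i | i. i < n \<and> lab i = s}) = 1 / real r" using j by (simp add: \<mu>'_def)
  qed
qed


theorem mainTheorem5:
  shows "M2 3 2 TYPE('a::euclidean_space) = DIM('a) + 1"
proof -
  obtain e :: "nat \<Rightarrow> 'a" where e: "bij_betw e {..<DIM('a)} Basis"
    using ex_bij_betw_nat_finite[of "Basis :: 'a set"] by (auto simp: atLeast0LessThan)
  interpret cubes e by (rule cubes.intro[OF e])
  have low: "fair_splittable 3 2 TYPE('a) (DIM('a) + 1)"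
    unfolding fair_splittable_def
  proof (intro allI impI)
    fix \<mu> :: "nat \<Rightarrow> 'a measure" assume a: "\<forall>j<DIM('a) + 1. admissible_measure (\<mu> j)"
    have ex: "\<exists>Ks (lab::nat \<Rightarrow> nat). iter_cut Ks \<and> length Ks = 3 \<and> (\<forall>i<3. lab i < 2) \<and>
           (\<forall>j<Suc DIM('a). \<forall>s<2. measure (\<mu> j) (\<Union>{Ks ! i | i. i < 3 \<and> lab i = s}) = 1 / real 2)"
      by (rule lower_bound) (use a in simp)
    show "\<exists>Ks (lab::nat \<Rightarrow> nat). iter_cut Ks \<and> length Ks = 3 \<and> (\<forall>i<3. lab i < 2) \<and>
           (\<forall>j<DIM('a) + 1. \<forall>s<2. measure (\<mu> j) (\<Union>{Ks ! i | i. i < 3 \<and> lab i = s}) = 1 / real 2)"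
      using ex by simp
  qed
  show ?thesis unfolding M2_def
  proof (rule Greatest_equality)
    show "fair_splittable 3 2 TYPE('a) (DIM('a) + 1)" by (rule low)
    fix y assume fy: "fair_splittable 3 2 TYPE('a) y"
    show "y \<le> DIM('a) + 1"
    proof (rule ccontr)
      assume "\<not> y \<le> DIM('a) + 1"
      then have "DIM('a) + 2 \<le> y" by simp
      then have "fair_splittable 3 2 TYPE('a) (DIM('a) + 2)" by (rule fair_mono[OF fy _ adm_Q])
      with not_fair show False by simp
    qed
  qed
qed

end
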